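(* There is a finite alphabet $\Sigma$ and a binary existential FO formula $\varphi(x_1,x_2\,;\,y)=\exists\bar z\,\psi(x_1,x_2,y,\bar z)$ (with $\psi$ quantifier-free) with one parameter variable $y$ such that there is no consistent formula learner for $\varphi$ whose running time is sublinear in the length of the string.
   Context: Strings as structures: a string $B=a_1\cdots a_n\in\Sigma^*$ is the structure with universe $U(B)=\{1,\ldots,n\}$, the natural order $<$, and unary relations $R_a$ ($a\in\Sigma$) of $a$-labelled positions (no successor relation). In $\varphi(x_1,x_2;y)$, $x_1,x_2$ are instance variables and $y$ is the parameter variable. For $v\in U(B)$, $[\![\varphi(x_1,x_2;v)]\!]^B(u_1,u_2)=1$ iff $B\models\varphi(u_1,u_2;v)$, else $0$. A training set over $B$ is a finite $T\subseteq U(B)^2\times\{0,1\}$; a parameter tuple is consistent with a formula, $B$, $T$ if the corresponding hypothesis agrees with all labels in $T$; $T$ is $\varphi$-consistent if some $v$ is consistent with $\varphi,B,T$. Local access: the algorithm receives $T$, initially holds only positions occurring in $T$, and may query labels of and retrieve successor/predecessor of positions it holds, each at unit cost. A consistent formula learner for $\varphi$ is a local-access algorithm for which there are numbers $q',\ell'$ such that on every string $B$ and every $\varphi$-consistent $T$ it outputs an MSO formula $\varphi'(x_1,x_2;\bar y')$ of quantifier rank at most $q'$ with $|\bar y'|\le\ell'$ and a tuple $\bar v'$ consistent with $\varphi',B,T$. Sublinear running time: for every fixed bound $t$ on the training set size there is $f_t$ with $f_t(n)/n\to0$ bounding the running time on strings of length $n$ with training sets of size at most $t$. *)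

theory Defs
  imports Complex_Main
begin

text \<open>A string is a list w; its universe is {1..length w}, position p carries
  letter w ! (p - 1).\<close>

datatype mso =
    Less nat nat
  | Eq nat nat
  | Lab nat nat
  | Mem nat nat
  | Neg mso
  | Conj mso mso
  | Ex1 nat mso
  | Ex2 nat mso

definition univ :: "nat list \<Rightarrow> nat set" where
  "univ w = {1..length w}"

fun sat :: "nat list \<Rightarrow> (nat \<Rightarrow> nat) \<Rightarrow> (nat \<Rightarrow> nat set) \<Rightarrow> mso \<Rightarrow> bool" where
  "sat w I J (Less x y) = (I x < I y)"
| "sat w I J (Eq x y) = (I x = I y)"
| "sat w I J (Lab a x) = (I x \<in> univ w \<and> w ! (I x - 1) = a)"
| "sat w I J (Mem x X) = (I x \<in> J X)"
| "sat w I J (Neg f) = (\<not> sat w I J f)"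
| "sat w I J (Conj f g) = (sat w I J f \<and> sat w I J g)"
| "sat w I J (Ex1 x f) = (\<exists>u\<in>univ w. sat w (I(x := u)) J f)"
| "sat w I J (Ex2 X f) = (\<exists>S. S \<subseteq> univ w \<and> sat w I (J(X := S)) f)"

fun qrank :: "mso \<Rightarrow> nat" where
  "qrank (Neg f) = qrank f"
| "qrank (Conj f g) = max (qrank f) (qrank g)"
| "qrank (Ex1 x f) = Suc (qrank f)"
| "qrank (Ex2 X f) = Suc (qrank f)"
| "qrank _ = 0"

fun fv1 :: "mso \<Rightarrow> nat set" where
  "fv1 (Less x y) = {x, y}"
| "fv1 (Eq x y) = {x, y}"
| "fv1 (Lab a x) = {x}"
| "fv1 (Mem x X) = {x}"
| "fv1 (Neg f) = fv1 f"
| "fv1 (Conj f g) = fv1 f \<union> fv1 g"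
| "fv1 (Ex1 x f) = fv1 f - {x}"
| "fv1 (Ex2 X f) = fv1 f"

fun fv2 :: "mso \<Rightarrow> nat set" where
  "fv2 (Mem x X) = {X}"
| "fv2 (Neg f) = fv2 f"
| "fv2 (Conj f g) = fv2 f \<union> fv2 g"
| "fv2 (Ex1 x f) = fv2 f"
| "fv2 (Ex2 X f) = fv2 f - {X}"
| "fv2 _ = {}"

fun qf_fo :: "mso \<Rightarrow> bool" where
  "qf_fo (Less x y) = True"
| "qf_fo (Eq x y) = True"
| "qf_fo (Lab a x) = True"
| "qf_fo (Mem x X) = False"
| "qf_fo (Neg f) = qf_fo f"
| "qf_fo (Conj f g) = (qf_fo f \<and> qf_fo g)"
| "qf_fo (Ex1 x f) = False"
| "qf_fo (Ex2 X f) = False"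

text \<open>Variable convention for a formula phi(x1,x2; y1..yl):
  variable 0 is x1, variable 1 is x2, variable (i+2) is the parameter y_(i+1).\<close>
definition has_vars :: "mso \<Rightarrow> nat \<Rightarrow> bool" where
  "has_vars f l \<longleftrightarrow> fv1 f \<subseteq> {..<l + 2} \<and> fv2 f = {}"

definition existential_fo_1param :: "mso \<Rightarrow> bool" where
  "existential_fo_1param f \<longleftrightarrow>
     (\<exists>zs psi. qf_fo psi \<and> f = foldr Ex1 zs psi) \<and> has_vars f 1"

definition assign :: "nat \<Rightarrow> nat \<Rightarrow> nat list \<Rightarrow> nat \<Rightarrow> nat" where
  "assign u1 u2 vs i =
     (if i = 0 then u1 else if i = 1 then u2
      else if i - 2 < length vs then vs ! (i - 2) else 1)"

definition hyp :: "nat list \<Rightarrow> mso \<Rightarrow> nat list \<Rightarrow> nat \<Rightarrow> nat \<Rightarrow> bool" where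
  "hyp w f vs u1 u2 = sat w (assign u1 u2 vs) (\<lambda>_. {}) f"

text \<open>Training sets: finite subsets of U(B)^2 x {0,1} (label 1 = True).\<close>
definition training_set :: "nat list \<Rightarrow> (nat \<times> nat \<times> bool) set \<Rightarrow> bool" where
  "training_set w T \<longleftrightarrow> finite T \<and> T \<subseteq> univ w \<times> univ w \<times> UNIV"

definition consistent :: "nat list \<Rightarrow> mso \<Rightarrow> nat list \<Rightarrow> (nat \<times> nat \<times> bool) set \<Rightarrow> bool" where
  "consistent w f vs T \<longleftrightarrow> set vs \<subseteq> univ w \<and> (\<forall>(u1, u2, b) \<in> T. b = hyp w f vs u1 u2)"

definition phi_consistent :: "nat list \<Rightarrow> mso \<Rightarrow> nat \<Rightarrow> (nat \<times> nat \<times> bool) set \<Rightarrow> bool" where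
  "phi_consistent w f l T \<longleftrightarrow> (\<exists>vs. length vs = l \<and> consistent w f vs T)"

datatype query = QLabel nat | QSucc nat | QPred nat

datatype answer = ALabel nat | APos "nat option"

datatype action = Ask query | Output mso "nat list"

text \<open>A (deterministic, adaptive) local-access algorithm: given the training set
  and the history of answers so far, it either asks a query or outputs a formula
  together with a parameter tuple.\<close>
type_synonym algorithm = "(nat \<times> nat \<times> bool) set \<Rightarrow> answer list \<Rightarrow> action"

fun qpos :: "query \<Rightarrow> nat" where
  "qpos (QLabel p) = p" | "qpos (QSucc p) = p" | "qpos (QPred p) = p"

fun answer_of :: "nat list \<Rightarrow> query \<Rightarrow> answer" where
  "answer_of w (QLabel p) = ALabel (w ! (p - 1))"
| "answer_of w (QSucc p) = APos (if p < length w then Some (Suc p) else None)"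
| "answer_of w (QPred p) = APos (if 1 < p then Some (p - 1) else None)"

definition held :: "(nat \<times> nat \<times> bool) set \<Rightarrow> answer list \<Rightarrow> nat set" where
  "held T h = {u. \<exists>v b. (u, v, b) \<in> T \<or> (v, u, b) \<in> T} \<union> {p. APos (Some p) \<in> set h}"

definition valid_run :: "algorithm \<Rightarrow> nat list \<Rightarrow> (nat \<times> nat \<times> bool) set \<Rightarrow> answer list \<Rightarrow> bool" where
  "valid_run A w T h \<longleftrightarrow>
     (\<forall>i < length h. \<exists>q. A T (take i h) = Ask q \<and> qpos q \<in> held T (take i h)
                         \<and> h ! i = answer_of w q)"

text \<open>A halts on (w,T) after exactly length h unit-cost queries with output (f, vs).\<close>
definition run_outputs :: "algorithm \<Rightarrow> nat list \<Rightarrow> (nat \<times> nat \<times> bool) set \<Rightarrow> answer list \<Rightarrow> mso \<Rightarrow> nat list \<Rightarrow> bool" where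
  "run_outputs A w T h f vs \<longleftrightarrow> valid_run A w T h \<and> A T h = Output f vs"

definition consistent_formula_learner :: "nat set \<Rightarrow> mso \<Rightarrow> algorithm \<Rightarrow> bool" where
  "consistent_formula_learner \<Sigma> \<phi> A \<longleftrightarrow>
     (\<exists>q' l'. \<forall>w T. set w \<subseteq> \<Sigma> \<and> training_set w T \<and> phi_consistent w \<phi> 1 T \<longrightarrow>
        (\<exists>h f vs. run_outputs A w T h f vs \<and> qrank f \<le> q' \<and> length vs \<le> l'
                  \<and> has_vars f (length vs) \<and> consistent w f vs T))"

definition sublinear_time :: "nat set \<Rightarrow> mso \<Rightarrow> algorithm \<Rightarrow> bool" where
  "sublinear_time \<Sigma> \<phi> A \<longleftrightarrow>
     (\<forall>t::nat. \<exists>g::nat \<Rightarrow> real. (\<lambda>n. g n / real n) \<longlonglongrightarrow> 0 \<and>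
        (\<forall>w T. set w \<subseteq> \<Sigma> \<and> training_set w T \<and> phi_consistent w \<phi> 1 T \<and> card T \<le> t \<longrightarrow>
           (\<exists>h f vs. run_outputs A w T h f vs \<and> real (length h) \<le> g (length w))))"

end

theory Submission
  imports Defs
begin


type_synonym cell = "nat \<times> nat set \<times> nat set"

definition atom :: "cell list \<Rightarrow> cell list" where
  "atom m = filter (\<lambda>c. fst (snd c) \<noteq> {}) m"

definition addfo :: "nat \<Rightarrow> nat \<Rightarrow> cell list \<Rightarrow> cell list" where
  "addfo i p m = m[p := (fst (m!p), insert i (fst (snd (m!p))), snd (snd (m!p)))]"

definition addso :: "nat \<Rightarrow> bool list \<Rightarrow> cell list \<Rightarrow> cell list" where
  "addso X bs m = map2 (\<lambda>c b. (fst c, fst (snd c), if b then insert X (snd (snd c)) else snd (snd c))) m bs"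

fun eqv :: "nat \<Rightarrow> nat \<Rightarrow> nat \<Rightarrow> nat set \<Rightarrow> nat set \<Rightarrow> cell list \<Rightarrow> cell list \<Rightarrow> bool" where
  "eqv K1 K2 0 U1 U2 m m' = (atom m = atom m')"
| "eqv K1 K2 (Suc q) U1 U2 m m' = (atom m = atom m' \<and>
   (\<forall>i. i < K1 \<and> i \<notin> U1 \<longrightarrow>
      (\<forall>p<length m. \<exists>p'<length m'. eqv K1 K2 q (insert i U1) U2 (addfo i p m) (addfo i p' m')) \<and>
      (\<forall>p'<length m'. \<exists>p<length m. eqv K1 K2 q (insert i U1) U2 (addfo i p m) (addfo i p' m'))) \<and>
   (\<forall>X. X < K2 \<and> X \<notin> U2 \<longrightarrow>
      (\<forall>bs. length bs = length m \<longrightarrow> (\<exists>bs'. length bs' = length m' \<and> eqv K1 K2 q U1 (insert X U2) (addso X bs m) (addso X bs' m'))) \<and>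
      (\<forall>bs'. length bs' = length m' \<longrightarrow> (\<exists>bs. length bs = length m \<and> eqv K1 K2 q U1 (insert X U2) (addso X bs m) (addso X bs' m')))))"

lemma length_addfo[simp]: "length (addfo i p m) = length m"
  by (simp add: addfo_def)

lemma length_addso[simp]: "length bs = length m \<Longrightarrow> length (addso X bs m) = length m"
  by (simp add: addso_def)

lemma eqv_refl: "eqv K1 K2 q U1 U2 m m"
proof (induction q arbitrary: U1 U2 m)
  case 0 then show ?case by simp
next
  case (Suc q) then show ?case by (simp, blast)
qed

lemma eqv_sym: "eqv K1 K2 q U1 U2 m m' \<Longrightarrow> eqv K1 K2 q U1 U2 m' m"
proof (induction q arbitrary: U1 U2 m m')
  case 0 then show ?case by simp
next
  case (Suc q)
  show ?case
  proof -
    have A: "atom m' = atom m" using Suc.prems by simp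
    have B: "\<forall>i. i < K1 \<and> i \<notin> U1 \<longrightarrow>
      (\<forall>p<length m'. \<exists>p'<length m. eqv K1 K2 q (insert i U1) U2 (addfo i p m') (addfo i p' m)) \<and>
      (\<forall>p'<length m. \<exists>p<length m'. eqv K1 K2 q (insert i U1) U2 (addfo i p m') (addfo i p' m))"
      using Suc.prems Suc.IH by simp metis
    have C: "\<forall>X. X < K2 \<and> X \<notin> U2 \<longrightarrow>
      (\<forall>bs. length bs = length m' \<longrightarrow> (\<exists>bs'. length bs' = length m \<and> eqv K1 K2 q U1 (insert X U2) (addso X bs m') (addso X bs' m))) \<and>
      (\<forall>bs'. length bs' = length m \<longrightarrow> (\<exists>bs. length bs = length m' \<and> eqv K1 K2 q U1 (insert X U2) (addso X bs m') (addso X bs' m)))"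
      using Suc.prems Suc.IH by simp metis
    show ?thesis using A B C by simp
  qed
qed


lemma eqv_down: "eqv K1 K2 (Suc q) U1 U2 m m' \<Longrightarrow> eqv K1 K2 q U1 U2 m m'"
proof (induction q arbitrary: U1 U2 m m')
  case 0 then show ?case by simp
next
  case (Suc q)
  note P = Suc.prems[unfolded eqv.simps(2)[of K1 K2 "Suc q" U1 U2 m m']]
  have A: "atom m = atom m'" using P by simp
  have B: "\<forall>i. i < K1 \<and> i \<notin> U1 \<longrightarrow>
      (\<forall>p<length m. \<exists>p'<length m'. eqv K1 K2 q (insert i U1) U2 (addfo i p m) (addfo i p' m')) \<and>
      (\<forall>p'<length m'. \<exists>p<length m. eqv K1 K2 q (insert i U1) U2 (addfo i p m) (addfo i p' m'))"
  proof (intro allI impI conjI)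
    fix i p assume i: "i < K1 \<and> i \<notin> U1" and p: "p < length m"
    then obtain p' where "p' < length m'" "eqv K1 K2 (Suc q) (insert i U1) U2 (addfo i p m) (addfo i p' m')"
      using P by blast
    then show "\<exists>p'<length m'. eqv K1 K2 q (insert i U1) U2 (addfo i p m) (addfo i p' m')" using Suc.IH by blast
  next
    fix i p assume i: "i < K1 \<and> i \<notin> U1" and p: "p < length m'"
    then obtain p' where "p' < length m" "eqv K1 K2 (Suc q) (insert i U1) U2 (addfo i p' m) (addfo i p m')"
      using P by blast
    then show "\<exists>p'<length m. eqv K1 K2 q (insert i U1) U2 (addfo i p' m) (addfo i p m')" using Suc.IH by blast
  qed
  have C: "\<forall>X. X < K2 \<and> X \<notin> U2 \<longrightarrow>
      (\<forall>bs. length bs = length m \<longrightarrow> (\<exists>bs'. length bs' = length m' \<and> eqv K1 K2 q U1 (insert X U2) (addso X bs m) (addso X bs' m'))) \<and>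
      (\<forall>bs'. length bs' = length m' \<longrightarrow> (\<exists>bs. length bs = length m \<and> eqv K1 K2 q U1 (insert X U2) (addso X bs m) (addso X bs' m')))"
  proof (intro allI impI conjI)
    fix X and bs :: "bool list" assume i: "X < K2 \<and> X \<notin> U2" and p: "length bs = length m"
    then obtain p' where "length p' = length m'" "eqv K1 K2 (Suc q) U1 (insert X U2) (addso X bs m) (addso X p' m')"
      using P by blast
    then show "\<exists>bs'. length bs' = length m' \<and> eqv K1 K2 q U1 (insert X U2) (addso X bs m) (addso X bs' m')" using Suc.IH by blast
  next
    fix X and bs :: "bool list" assume i: "X < K2 \<and> X \<notin> U2" and p: "length bs = length m'"
    then obtain p' where "length p' = length m" "eqv K1 K2 (Suc q) U1 (insert X U2) (addso X p' m) (addso X bs m')"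
      using P by blast
    then show "\<exists>bs'. length bs' = length m \<and> eqv K1 K2 q U1 (insert X U2) (addso X bs' m) (addso X bs m')" using Suc.IH by blast
  qed
  show ?case using A B C by simp
qed


lemma eqv_Umono: "eqv K1 K2 q U1 U2 m m' \<Longrightarrow> U1 \<subseteq> V1 \<Longrightarrow> U2 \<subseteq> V2 \<Longrightarrow> eqv K1 K2 q V1 V2 m m'"
proof (induction q arbitrary: U1 U2 V1 V2 m m')
  case 0 then show ?case by simp
next
  case (Suc q)
  note P = Suc.prems(1)[unfolded eqv.simps(2)[of K1 K2 q U1 U2 m m']]
  have A: "atom m = atom m'" using P by simp
  have B: "\<forall>i. i < K1 \<and> i \<notin> V1 \<longrightarrow>
      (\<forall>p<length m. \<exists>p'<length m'. eqv K1 K2 q (insert i V1) V2 (addfo i p m) (addfo i p' m')) \<and>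
      (\<forall>p'<length m'. \<exists>p<length m. eqv K1 K2 q (insert i V1) V2 (addfo i p m) (addfo i p' m'))"
  proof (intro allI impI conjI)
    fix i p assume i: "i < K1 \<and> i \<notin> V1" and p: "p < length m"
    then have i': "i < K1 \<and> i \<notin> U1" using Suc.prems by auto
    then obtain p' where pp: "p' < length m'" and e: "eqv K1 K2 q (insert i U1) U2 (addfo i p m) (addfo i p' m')"
      using P p by blast
    show "\<exists>p'<length m'. eqv K1 K2 q (insert i V1) V2 (addfo i p m) (addfo i p' m')" using pp Suc.IH[OF e] Suc.prems by (meson insert_mono)
  next
    fix i p assume i: "i < K1 \<and> i \<notin> V1" and p: "p < length m'"
    then have i': "i < K1 \<and> i \<notin> U1" using Suc.prems by auto
    then obtain p' where pp: "p' < length m" and e: "eqv K1 K2 q (insert i U1) U2 (addfo i p' m) (addfo i p m')"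
      using P p by blast
    show "\<exists>p'<length m. eqv K1 K2 q (insert i V1) V2 (addfo i p' m) (addfo i p m')" using pp Suc.IH[OF e] Suc.prems by (meson insert_mono)
  qed
  have C: "\<forall>X. X < K2 \<and> X \<notin> V2 \<longrightarrow>
      (\<forall>bs. length bs = length m \<longrightarrow> (\<exists>bs'. length bs' = length m' \<and> eqv K1 K2 q V1 (insert X V2) (addso X bs m) (addso X bs' m'))) \<and>
      (\<forall>bs'. length bs' = length m' \<longrightarrow> (\<exists>bs. length bs = length m \<and> eqv K1 K2 q V1 (insert X V2) (addso X bs m) (addso X bs' m')))"
  proof (intro allI impI conjI)
    fix X and bs :: "bool list" assume i: "X < K2 \<and> X \<notin> V2" and p: "length bs = length m"
    then have i': "X < K2 \<and> X \<notin> U2" using Suc.prems by auto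
    then obtain p' where pp: "length p' = length m'" and e: "eqv K1 K2 q U1 (insert X U2) (addso X bs m) (addso X p' m')"
      using P p by blast
    show "\<exists>bs'. length bs' = length m' \<and> eqv K1 K2 q V1 (insert X V2) (addso X bs m) (addso X bs' m')" using pp Suc.IH[OF e] Suc.prems by (meson insert_mono)
  next
    fix X and bs :: "bool list" assume i: "X < K2 \<and> X \<notin> V2" and p: "length bs = length m'"
    then have i': "X < K2 \<and> X \<notin> U2" using Suc.prems by auto
    then obtain p' where pp: "length p' = length m" and e: "eqv K1 K2 q U1 (insert X U2) (addso X p' m) (addso X bs m')"
      using P p by blast
    show "\<exists>bs'. length bs' = length m \<and> eqv K1 K2 q V1 (insert X V2) (addso X bs' m) (addso X bs m')" using pp Suc.IH[OF e] Suc.prems by (meson insert_mono)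
  qed
  show ?case using A B C by simp
qed


lemma eqv_trans: "eqv K1 K2 q U1 U2 m1 m2 \<Longrightarrow> eqv K1 K2 q U1 U2 m2 m3 \<Longrightarrow> eqv K1 K2 q U1 U2 m1 m3"
proof (induction q arbitrary: U1 U2 m1 m2 m3)
  case 0 then show ?case by simp
next
  case (Suc q)
  note P1 = Suc.prems(1)[unfolded eqv.simps(2)[of K1 K2 q U1 U2 m1 m2]]
  note P2 = Suc.prems(2)[unfolded eqv.simps(2)[of K1 K2 q U1 U2 m2 m3]]
  have A: "atom m1 = atom m3" using P1 P2 by simp
  have B: "\<forall>i. i < K1 \<and> i \<notin> U1 \<longrightarrow>
      (\<forall>p<length m1. \<exists>p'<length m3. eqv K1 K2 q (insert i U1) U2 (addfo i p m1) (addfo i p' m3)) \<and>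
      (\<forall>p'<length m3. \<exists>p<length m1. eqv K1 K2 q (insert i U1) U2 (addfo i p m1) (addfo i p' m3))"
  proof (intro allI impI conjI)
    fix i p assume i: "i < K1 \<and> i \<notin> U1" and p: "p < length m1"
    obtain p2 where p2: "p2 < length m2" "eqv K1 K2 q (insert i U1) U2 (addfo i p m1) (addfo i p2 m2)"
      using P1 i p by blast
    obtain p3 where p3: "p3 < length m3" "eqv K1 K2 q (insert i U1) U2 (addfo i p2 m2) (addfo i p3 m3)"
      using P2 i p2(1) by blast
    show "\<exists>p'<length m3. eqv K1 K2 q (insert i U1) U2 (addfo i p m1) (addfo i p' m3)"
      using p3(1) Suc.IH[OF p2(2) p3(2)] by blast
  next
    fix i p assume i: "i < K1 \<and> i \<notin> U1" and p: "p < length m3"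
    obtain p2 where p2: "p2 < length m2" "eqv K1 K2 q (insert i U1) U2 (addfo i p2 m2) (addfo i p m3)"
      using P2 i p by blast
    obtain p1 where p1: "p1 < length m1" "eqv K1 K2 q (insert i U1) U2 (addfo i p1 m1) (addfo i p2 m2)"
      using P1 i p2(1) by blast
    show "\<exists>p'<length m1. eqv K1 K2 q (insert i U1) U2 (addfo i p' m1) (addfo i p m3)"
      using p1(1) Suc.IH[OF p1(2) p2(2)] by blast
  qed
  have C: "\<forall>X. X < K2 \<and> X \<notin> U2 \<longrightarrow>
      (\<forall>bs. length bs = length m1 \<longrightarrow> (\<exists>bs'. length bs' = length m3 \<and> eqv K1 K2 q U1 (insert X U2) (addso X bs m1) (addso X bs' m3))) \<and>
      (\<forall>bs'. length bs' = length m3 \<longrightarrow> (\<exists>bs. length bs = length m1 \<and> eqv K1 K2 q U1 (insert X U2) (addso X bs m1) (addso X bs' m3)))"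
  proof (intro allI impI conjI)
    fix X and bs :: "bool list" assume i: "X < K2 \<and> X \<notin> U2" and p: "length bs = length m1"
    obtain p2 where p2: "length p2 = length m2" "eqv K1 K2 q U1 (insert X U2) (addso X bs m1) (addso X p2 m2)"
      using P1 i p by blast
    obtain p3 where p3: "length p3 = length m3" "eqv K1 K2 q U1 (insert X U2) (addso X p2 m2) (addso X p3 m3)"
      using P2 i p2(1) by blast
    show "\<exists>bs'. length bs' = length m3 \<and> eqv K1 K2 q U1 (insert X U2) (addso X bs m1) (addso X bs' m3)"
      using p3(1) Suc.IH[OF p2(2) p3(2)] by blast
  next
    fix X and bs :: "bool list" assume i: "X < K2 \<and> X \<notin> U2" and p: "length bs = length m3"
    obtain p2 where p2: "length p2 = length m2" "eqv K1 K2 q U1 (insert X U2) (addso X p2 m2) (addso X bs m3)"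
      using P2 i p by blast
    obtain p1 where p1: "length p1 = length m1" "eqv K1 K2 q U1 (insert X U2) (addso X p1 m1) (addso X p2 m2)"
      using P1 i p2(1) by blast
    show "\<exists>bs'. length bs' = length m1 \<and> eqv K1 K2 q U1 (insert X U2) (addso X bs' m1) (addso X bs m3)"
      using p1(1) Suc.IH[OF p1(2) p2(2)] by blast
  qed
  show ?case using A B C by simp
qed


lemma atom_append: "atom (m1 @ m2) = atom m1 @ atom m2"
  by (simp add: atom_def)

lemma addfo_append1: "p < length m1 \<Longrightarrow> addfo i p (m1 @ m2) = addfo i p m1 @ m2"
  by (simp add: addfo_def nth_append list_update_append)

lemma addfo_append2: "length m1 \<le> p \<Longrightarrow> addfo i p (m1 @ m2) = m1 @ addfo i (p - length m1) m2"
  by (simp add: addfo_def nth_append list_update_append)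

lemma addso_append: "length bs1 = length m1 \<Longrightarrow> addso X (bs1 @ bs2) (m1 @ m2) = addso X bs1 m1 @ addso X bs2 m2"
  by (simp add: addso_def)

lemma eqv_append: "eqv K1 K2 q U1 U2 m1 m1' \<Longrightarrow> eqv K1 K2 q U1 U2 m2 m2' \<Longrightarrow> eqv K1 K2 q U1 U2 (m1 @ m2) (m1' @ m2')"
proof (induction q arbitrary: U1 U2 m1 m1' m2 m2')
  case 0 then show ?case by (simp add: atom_append)
next
  case (Suc q)
  note P1 = Suc.prems(1)[unfolded eqv.simps(2)[of K1 K2 q U1 U2 m1 m1']]
  note P2 = Suc.prems(2)[unfolded eqv.simps(2)[of K1 K2 q U1 U2 m2 m2']]
  have D1: "eqv K1 K2 q U1 U2 m1 m1'" using Suc.prems(1) by (rule eqv_down)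
  have D2: "eqv K1 K2 q U1 U2 m2 m2'" using Suc.prems(2) by (rule eqv_down)
  have A: "atom (m1 @ m2) = atom (m1' @ m2')" using P1 P2 by (simp add: atom_append)
  have B: "\<forall>i. i < K1 \<and> i \<notin> U1 \<longrightarrow>
      (\<forall>p<length (m1 @ m2). \<exists>p'<length (m1' @ m2'). eqv K1 K2 q (insert i U1) U2 (addfo i p (m1 @ m2)) (addfo i p' (m1' @ m2'))) \<and>
      (\<forall>p'<length (m1' @ m2'). \<exists>p<length (m1 @ m2). eqv K1 K2 q (insert i U1) U2 (addfo i p (m1 @ m2)) (addfo i p' (m1' @ m2')))"
  proof (intro allI impI conjI)
    fix i p assume i: "i < K1 \<and> i \<notin> U1" and p: "p < length (m1 @ m2)"
    have E1: "eqv K1 K2 q (insert i U1) U2 m1 m1'" by (rule eqv_Umono[OF D1]) auto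
    have E2: "eqv K1 K2 q (insert i U1) U2 m2 m2'" by (rule eqv_Umono[OF D2]) auto
    show "\<exists>p'<length (m1' @ m2'). eqv K1 K2 q (insert i U1) U2 (addfo i p (m1 @ m2)) (addfo i p' (m1' @ m2'))"
    proof (cases "p < length m1")
      case True
      then obtain p' where pp: "p' < length m1'" and e: "eqv K1 K2 q (insert i U1) U2 (addfo i p m1) (addfo i p' m1')"
        using P1 i by blast
      have "eqv K1 K2 q (insert i U1) U2 (addfo i p m1 @ m2) (addfo i p' m1' @ m2')" by (rule Suc.IH[OF e E2])
      then show ?thesis using pp True by (intro exI[of _ p']) (simp add: addfo_append1)
    next
      case False
      then have pl: "p - length m1 < length m2" using p by simp
      then obtain p' where pp: "p' < length m2'" and e: "eqv K1 K2 q (insert i U1) U2 (addfo i (p - length m1) m2) (addfo i p' m2')"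
        using P2 i by blast
      have "eqv K1 K2 q (insert i U1) U2 (m1 @ addfo i (p - length m1) m2) (m1' @ addfo i p' m2')" by (rule Suc.IH[OF E1 e])
      then show ?thesis using pp False by (intro exI[of _ "length m1' + p'"]) (simp add: addfo_append2)
    qed
  next
    fix i p assume i: "i < K1 \<and> i \<notin> U1" and p: "p < length (m1' @ m2')"
    have E1: "eqv K1 K2 q (insert i U1) U2 m1 m1'" by (rule eqv_Umono[OF D1]) auto
    have E2: "eqv K1 K2 q (insert i U1) U2 m2 m2'" by (rule eqv_Umono[OF D2]) auto
    show "\<exists>p'<length (m1 @ m2). eqv K1 K2 q (insert i U1) U2 (addfo i p' (m1 @ m2)) (addfo i p (m1' @ m2'))"
    proof (cases "p < length m1'")
      case True
      then obtain p' where pp: "p' < length m1" and e: "eqv K1 K2 q (insert i U1) U2 (addfo i p' m1) (addfo i p m1')"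
        using P1 i by blast
      have "eqv K1 K2 q (insert i U1) U2 (addfo i p' m1 @ m2) (addfo i p m1' @ m2')" by (rule Suc.IH[OF e E2])
      then show ?thesis using pp True by (intro exI[of _ p']) (simp add: addfo_append1)
    next
      case False
      then have pl: "p - length m1' < length m2'" using p by simp
      then obtain p' where pp: "p' < length m2" and e: "eqv K1 K2 q (insert i U1) U2 (addfo i p' m2) (addfo i (p - length m1') m2')"
        using P2 i by blast
      have "eqv K1 K2 q (insert i U1) U2 (m1 @ addfo i p' m2) (m1' @ addfo i (p - length m1') m2')" by (rule Suc.IH[OF E1 e])
      then show ?thesis using pp False by (intro exI[of _ "length m1 + p'"]) (simp add: addfo_append2)
    qed
  qed
  have C: "\<forall>X. X < K2 \<and> X \<notin> U2 \<longrightarrow>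
      (\<forall>bs. length bs = length (m1 @ m2) \<longrightarrow> (\<exists>bs'. length bs' = length (m1' @ m2') \<and> eqv K1 K2 q U1 (insert X U2) (addso X bs (m1 @ m2)) (addso X bs' (m1' @ m2')))) \<and>
      (\<forall>bs'. length bs' = length (m1' @ m2') \<longrightarrow> (\<exists>bs. length bs = length (m1 @ m2) \<and> eqv K1 K2 q U1 (insert X U2) (addso X bs (m1 @ m2)) (addso X bs' (m1' @ m2'))))"
  proof (intro allI impI conjI)
    fix X and bs :: "bool list" assume i: "X < K2 \<and> X \<notin> U2" and p: "length bs = length (m1 @ m2)"
    define b1 where "b1 = take (length m1) bs"
    define b2 where "b2 = drop (length m1) bs"
    have bs: "bs = b1 @ b2" "length b1 = length m1" "length b2 = length m2" using p by (auto simp: b1_def b2_def)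
    obtain c1 where c1: "length c1 = length m1'" and e1: "eqv K1 K2 q U1 (insert X U2) (addso X b1 m1) (addso X c1 m1')"
      using P1 i bs by blast
    obtain c2 where c2: "length c2 = length m2'" and e2: "eqv K1 K2 q U1 (insert X U2) (addso X b2 m2) (addso X c2 m2')"
      using P2 i bs by blast
    have "eqv K1 K2 q U1 (insert X U2) (addso X b1 m1 @ addso X b2 m2) (addso X c1 m1' @ addso X c2 m2')"
      by (rule Suc.IH[OF e1 e2])
    then show "\<exists>bs'. length bs' = length (m1' @ m2') \<and> eqv K1 K2 q U1 (insert X U2) (addso X bs (m1 @ m2)) (addso X bs' (m1' @ m2'))"
      using c1 c2 bs by (intro exI[of _ "c1 @ c2"]) (simp add: addso_append)
  next
    fix X and bs :: "bool list" assume i: "X < K2 \<and> X \<notin> U2" and p: "length bs = length (m1' @ m2')"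
    define b1 where "b1 = take (length m1') bs"
    define b2 where "b2 = drop (length m1') bs"
    have bs: "bs = b1 @ b2" "length b1 = length m1'" "length b2 = length m2'" using p by (auto simp: b1_def b2_def)
    obtain c1 where c1: "length c1 = length m1" and e1: "eqv K1 K2 q U1 (insert X U2) (addso X c1 m1) (addso X b1 m1')"
      using P1 i bs by blast
    obtain c2 where c2: "length c2 = length m2" and e2: "eqv K1 K2 q U1 (insert X U2) (addso X c2 m2) (addso X b2 m2')"
      using P2 i bs by blast
    have "eqv K1 K2 q U1 (insert X U2) (addso X c1 m1 @ addso X c2 m2) (addso X b1 m1' @ addso X b2 m2')"
      by (rule Suc.IH[OF e1 e2])
    then show "\<exists>bs'. length bs' = length (m1 @ m2) \<and> eqv K1 K2 q U1 (insert X U2) (addso X bs' (m1 @ m2)) (addso X bs (m1' @ m2'))"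
      using c1 c2 bs by (intro exI[of _ "c1 @ c2"]) (simp add: addso_append)
  qed
  show ?case using A B C by (simp only: eqv.simps(2))
qed


definition Pc :: "cell \<Rightarrow> bool" where "Pc c = (fst (snd c) \<noteq> {})"

definition cnt :: "cell list \<Rightarrow> nat \<Rightarrow> nat" where "cnt m p = length (atom (take p m))"

definition wfm :: "cell list \<Rightarrow> bool" where
  "wfm m = (\<forall>p p' i. p < length m \<longrightarrow> p' < length m \<longrightarrow> i \<in> fst (snd (m!p)) \<longrightarrow> i \<in> fst (snd (m!p')) \<longrightarrow> p = p')"

definition foidx :: "cell list \<Rightarrow> nat set" where "foidx m = (\<Union>c\<in>set m. fst (snd c))"
definition soidx :: "cell list \<Rightarrow> nat set" where "soidx m = (\<Union>c\<in>set m. snd (snd c))"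

lemma atom_Cons: "atom (c # m) = (if Pc c then c # atom m else atom m)"
  by (simp add: atom_def Pc_def)

lemma cnt_Suc: "cnt (c # m) (Suc p) = (if Pc c then 1 else 0) + cnt m p"
  by (simp add: cnt_def atom_Cons)

lemma cnt_0[simp]: "cnt m 0 = 0"
  by (simp add: cnt_def atom_def)

lemma L1: "p < length m \<Longrightarrow> Pc (m!p) \<Longrightarrow> cnt m p < length (atom m) \<and> atom m ! cnt m p = m!p"
proof (induction m arbitrary: p)
  case Nil then show ?case by simp
next
  case (Cons c m)
  show ?case
  proof (cases p)
    case 0 then show ?thesis using Cons.prems by (simp add: atom_Cons)
  next
    case (Suc p0)
    then have "p0 < length m" "Pc (m!p0)" using Cons.prems by auto
    then have "cnt m p0 < length (atom m) \<and> atom m ! cnt m p0 = m!p0" by (rule Cons.IH)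
    then show ?thesis using Suc by (simp add: cnt_Suc atom_Cons)
  qed
qed

lemma L2: "k < length (atom m) \<Longrightarrow> \<exists>p<length m. Pc (m!p) \<and> cnt m p = k"
proof (induction m arbitrary: k)
  case Nil then show ?case by (simp add: atom_def)
next
  case (Cons c m)
  show ?case
  proof (cases "Pc c")
    case True
    show ?thesis
    proof (cases k)
      case 0 then show ?thesis using True by (intro exI[of _ 0]) simp
    next
      case (Suc k0)
      then have "k0 < length (atom m)" using Cons.prems True by (simp add: atom_Cons)
      then obtain p where "p < length m" "Pc (m!p)" "cnt m p = k0" using Cons.IH by blast
      then show ?thesis using True Suc by (intro exI[of _ "Suc p"]) (simp add: cnt_Suc)
    qed
  next
    case False
    then have "k < length (atom m)" using Cons.prems by (simp add: atom_Cons)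
    then obtain p where "p < length m" "Pc (m!p)" "cnt m p = k" using Cons.IH by blast
    then show ?thesis using False by (intro exI[of _ "Suc p"]) (simp add: cnt_Suc)
  qed
qed

lemma cnt_mono: "p \<le> q \<Longrightarrow> cnt m p \<le> cnt m q"
proof (induction m arbitrary: p q)
  case Nil then show ?case by (simp add: cnt_def)
next
  case (Cons c m)
  show ?case
  proof (cases p)
    case 0 then show ?thesis by simp
  next
    case (Suc p0)
    then obtain q0 where "q = Suc q0" "p0 \<le> q0" using Cons.prems by (cases q) auto
    then show ?thesis using Suc Cons.IH by (simp add: cnt_Suc)
  qed
qed

lemma L3: "p < q \<Longrightarrow> p < length m \<Longrightarrow> Pc (m!p) \<Longrightarrow> cnt m p < cnt m q"
proof (induction m arbitrary: p q)
  case Nil then show ?case by simp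
next
  case (Cons c m)
  obtain q0 where q: "q = Suc q0" using Cons.prems by (cases q) auto
  show ?case
  proof (cases p)
    case 0 then show ?thesis using Cons.prems q by (simp add: cnt_Suc)
  next
    case (Suc p0)
    then have "cnt m p0 < cnt m q0" using Cons.prems q by (intro Cons.IH) auto
    then show ?thesis using Suc q by (simp add: cnt_Suc)
  qed
qed

lemma cnt_less_iff: "p < length m \<Longrightarrow> q < length m \<Longrightarrow> Pc (m!p) \<Longrightarrow> Pc (m!q) \<Longrightarrow> (p < q \<longleftrightarrow> cnt m p < cnt m q)"
  by (metis L3 linorder_neqE_nat not_less_iff_gr_or_eq)

lemma cnt_eq_iff: "p < length m \<Longrightarrow> q < length m \<Longrightarrow> Pc (m!p) \<Longrightarrow> Pc (m!q) \<Longrightarrow> (p = q \<longleftrightarrow> cnt m p = cnt m q)"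
  by (metis L3 linorder_neqE_nat less_irrefl)

lemma atom_pos:
  assumes "atom m = atom m'" "wfm m" "wfm m'" "p < length m" "p' < length m'"
    "i \<in> fst (snd (m!p))" "i \<in> fst (snd (m'!p'))"
  shows "cnt m p = cnt m' p' \<and> m!p = m'!p'"
proof -
  have P1: "Pc (m!p)" using assms(6) by (auto simp: Pc_def)
  have P2: "Pc (m'!p')" using assms(7) by (auto simp: Pc_def)
  have k1: "cnt m p < length (atom m) \<and> atom m ! cnt m p = m!p" using L1 assms(4) P1 by blast
  have k2: "cnt m' p' < length (atom m') \<and> atom m' ! cnt m' p' = m'!p'" using L1 assms(5) P2 by blast
  obtain p2 where p2: "p2 < length m" "Pc (m!p2)" "cnt m p2 = cnt m' p'" using L2 k2 assms(1) by metis
  have "atom m ! cnt m p2 = m!p2" using L1 p2(1,2) by blast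
  then have "m!p2 = m'!p'" using p2(3) k2 assms(1) by simp
  then have "i \<in> fst (snd (m!p2))" using assms(7) by simp
  then have "p2 = p" using assms(2,4,6) p2(1) unfolding wfm_def by blast
  then show ?thesis using p2 \<open>m!p2 = m'!p'\<close> by simp
qed

lemma eqv_atom: "eqv K1 K2 q U1 U2 m m' \<Longrightarrow> atom m = atom m'"
  by (cases q) auto

definition rep :: "cell list \<Rightarrow> nat list \<Rightarrow> (nat \<Rightarrow> nat) \<Rightarrow> (nat \<Rightarrow> nat set) \<Rightarrow> (nat \<Rightarrow> nat) \<Rightarrow> (nat \<Rightarrow> nat) \<Rightarrow> nat set \<Rightarrow> nat set \<Rightarrow> bool" where
  "rep m w I J \<sigma> \<tau> F1 F2 \<longleftrightarrow> map fst m = w \<and>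
     (\<forall>x\<in>F1. I x \<in> univ w \<and> \<sigma> x \<in> fst (snd (m!(I x - 1)))) \<and>
     (\<forall>X\<in>F2. \<forall>p\<in>univ w. (p \<in> J X \<longleftrightarrow> \<tau> X \<in> snd (snd (m!(p - 1)))))"

lemma univ_iff: "p \<in> univ w \<longleftrightarrow> 1 \<le> p \<and> p \<le> length w"
  by (simp add: univ_def)

lemma rep_pos: "rep m w I J \<sigma> \<tau> F1 F2 \<Longrightarrow> x \<in> F1 \<Longrightarrow>
   I x - 1 < length m \<and> I x = Suc (I x - 1) \<and> \<sigma> x \<in> fst (snd (m!(I x - 1))) \<and> length m = length w"
proof -
  assume r: "rep m w I J \<sigma> \<tau> F1 F2" and x: "x \<in> F1"
  then have l: "length m = length w" unfolding rep_def by (metis length_map)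
  have u: "1 \<le> I x \<and> I x \<le> length w" "\<sigma> x \<in> fst (snd (m!(I x - 1)))" using r x unfolding rep_def univ_def by auto
  show ?thesis using l u by auto
qed

lemma two_pos:
  assumes "atom m = atom m'" "wfm m" "wfm m'" "rep m w I J \<sigma> \<tau> F1 F2" "rep m' w' I' J' \<sigma> \<tau> F1 F2" "x \<in> F1" "y \<in> F1"
  shows "(I x < I y \<longleftrightarrow> I' x < I' y) \<and> (I x = I y \<longleftrightarrow> I' x = I' y) \<and> m!(I x - 1) = m'!(I' x - 1)"
proof -
  note a = rep_pos[OF assms(4) assms(6)] and b = rep_pos[OF assms(4) assms(7)]
  note a' = rep_pos[OF assms(5) assms(6)] and b' = rep_pos[OF assms(5) assms(7)]
  have x: "cnt m (I x - 1) = cnt m' (I' x - 1) \<and> m!(I x - 1) = m'!(I' x - 1)"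
    using atom_pos[OF assms(1-3)] a a' by blast
  have y: "cnt m (I y - 1) = cnt m' (I' y - 1) \<and> m!(I y - 1) = m'!(I' y - 1)"
    using atom_pos[OF assms(1-3)] b b' by blast
  have P: "Pc (m!(I x - 1))" "Pc (m!(I y - 1))" "Pc (m'!(I' x - 1))" "Pc (m'!(I' y - 1))"
    using a b a' b' by (auto simp: Pc_def)
  have "(I x - 1 < I y - 1) \<longleftrightarrow> (I' x - 1 < I' y - 1)"
    using cnt_less_iff[of "I x - 1" m "I y - 1"] cnt_less_iff[of "I' x - 1" m' "I' y - 1"] a b a' b' P x y by simp
  moreover have "(I x - 1 = I y - 1) \<longleftrightarrow> (I' x - 1 = I' y - 1)"
    using cnt_eq_iff[of "I x - 1" m "I y - 1"] cnt_eq_iff[of "I' x - 1" m' "I' y - 1"] a b a' b' P x y by simp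
  ultimately show ?thesis using a b a' b' x by linarith
qed

lemma addfo_nth: "p < length m \<Longrightarrow> k < length m \<Longrightarrow> addfo i p m ! k = (if k = p then (fst (m!p), insert i (fst (snd (m!p))), snd (snd (m!p))) else m!k)"
  by (simp add: addfo_def)

lemma addfo_fst[simp]: "map fst (addfo i p m) = map fst m"
proof (rule nth_equalityI)
  show "length (map fst (addfo i p m)) = length (map fst m)" by simp
  fix k assume "k < length (map fst (addfo i p m))"
  then show "map fst (addfo i p m) ! k = map fst m ! k" by (cases "k = p") (auto simp: addfo_def nth_list_update)
qed

lemma addso_nth: "length bs = length m \<Longrightarrow> k < length m \<Longrightarrow> addso X bs m ! k = (fst (m!k), fst (snd (m!k)), if bs!k then insert X (snd (snd (m!k))) else snd (snd (m!k)))"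
  by (simp add: addso_def)

lemma addso_fst[simp]: "length bs = length m \<Longrightarrow> map fst (addso X bs m) = map fst m"
  by (rule nth_equalityI) (auto simp: addso_nth)

lemma wfm_addfo: "wfm m \<Longrightarrow> i \<notin> foidx m \<Longrightarrow> p < length m \<Longrightarrow> wfm (addfo i p m)"
  unfolding wfm_def foidx_def by (simp add: addfo_nth) (metis nth_mem)

lemma wfm_addso: "wfm m \<Longrightarrow> length bs = length m \<Longrightarrow> wfm (addso X bs m)"
  unfolding wfm_def by (simp add: addso_nth)

lemma foidx_addfo: "p < length m \<Longrightarrow> foidx (addfo i p m) \<subseteq> insert i (foidx m)"
proof
  fix x assume p: "p < length m" and x: "x \<in> foidx (addfo i p m)"
  then obtain k where k: "k < length m" "x \<in> fst (snd (addfo i p m ! k))" unfolding foidx_def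
    by (auto simp: in_set_conv_nth)
  show "x \<in> insert i (foidx m)"
  proof (cases "k = p")
    case True then show ?thesis using k p by (auto simp: addfo_nth foidx_def)
  next
    case False then have "x \<in> fst (snd (m!k))" using k p by (simp add: addfo_nth)
    then show ?thesis using k(1) unfolding foidx_def by (meson UN_I insertI2 nth_mem)
  qed
qed

lemma soidx_addfo: "p < length m \<Longrightarrow> soidx (addfo i p m) \<subseteq> soidx m"
proof
  fix x assume p: "p < length m" and x: "x \<in> soidx (addfo i p m)"
  then obtain k where k: "k < length m" "x \<in> snd (snd (addfo i p m ! k))" unfolding soidx_def
    by (auto simp: in_set_conv_nth)
  then have "x \<in> snd (snd (m!k))" using p by (simp add: addfo_nth split: if_splits)
  then show "x \<in> soidx m" using k(1) unfolding soidx_def by (meson UN_I nth_mem)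
qed

lemma foidx_addso: "length bs = length m \<Longrightarrow> foidx (addso X bs m) \<subseteq> foidx m"
proof
  fix x assume p: "length bs = length m" and x: "x \<in> foidx (addso X bs m)"
  then obtain k where k: "k < length m" "x \<in> fst (snd (addso X bs m ! k))" unfolding foidx_def
    by (auto simp: in_set_conv_nth)
  then have "x \<in> fst (snd (m!k))" using p by (simp add: addso_nth)
  then show "x \<in> foidx m" using k(1) unfolding foidx_def by (meson UN_I nth_mem)
qed

lemma soidx_addso: "length bs = length m \<Longrightarrow> soidx (addso X bs m) \<subseteq> insert X (soidx m)"
proof
  fix x assume p: "length bs = length m" and x: "x \<in> soidx (addso X bs m)"
  then obtain k where k: "k < length m" "x \<in> snd (snd (addso X bs m ! k))" unfolding soidx_def
    by (auto simp: in_set_conv_nth)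
  then have "x = X \<or> x \<in> snd (snd (m!k))" using p by (simp add: addso_nth split: if_splits)
  then show "x \<in> insert X (soidx m)" using k(1) unfolding soidx_def by (meson UN_I insertCI nth_mem)
qed

lemma fresh_card: "1 \<le> card ({..<K} - U) \<Longrightarrow> \<exists>i. i < K \<and> i \<notin> U"
  by (metis Diff_iff card.empty ex_in_conv lessThan_iff not_one_le_zero)

lemma card_fresh: "i < K \<Longrightarrow> i \<notin> U \<Longrightarrow> card ({..<K} - insert i U) = card ({..<K} - U) - 1"
proof -
  assume "i < K" "i \<notin> U"
  then have "{..<K} - insert i U = ({..<K} - U) - {i}" "i \<in> {..<K} - U" by auto
  then show ?thesis by (simp add: card_Diff_singleton)
qed

lemma rep_mono: "rep m w I J \<sigma> \<tau> F1 F2 \<Longrightarrow> G1 \<subseteq> F1 \<Longrightarrow> G2 \<subseteq> F2 \<Longrightarrow> rep m w I J \<sigma> \<tau> G1 G2"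
  unfolding rep_def by blast

lemma rep_addfo:
  assumes "rep m w I J \<sigma> \<tau> (F1 - {x}) F2" "p < length m"
  shows "rep (addfo i p m) w (I(x := Suc p)) J (\<sigma>(x := i)) \<tau> F1 F2"
proof -
  have l: "length m = length w" using assms(1) unfolding rep_def by (metis length_map)
  have A: "map fst (addfo i p m) = w" using assms(1) unfolding rep_def by simp
  have B: "\<forall>y\<in>F1. (I(x := Suc p)) y \<in> univ w \<and> (\<sigma>(x := i)) y \<in> fst (snd (addfo i p m ! ((I(x := Suc p)) y - 1)))"
  proof
    fix y assume y: "y \<in> F1"
    show "(I(x := Suc p)) y \<in> univ w \<and> (\<sigma>(x := i)) y \<in> fst (snd (addfo i p m ! ((I(x := Suc p)) y - 1)))"
    proof (cases "y = x")
      case True then show ?thesis using assms(2) l by (simp add: univ_def addfo_nth)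
    next
      case False
      then have r: "I y \<in> univ w" "\<sigma> y \<in> fst (snd (m!(I y - 1)))" using assms(1) y unfolding rep_def by auto
      then have "I y - 1 < length m" using l by (auto simp: univ_def)
      then show ?thesis using False r assms(2) by (cases "I y - 1 = p") (auto simp: addfo_nth)
    qed
  qed
  have C: "\<forall>X\<in>F2. \<forall>q\<in>univ w. (q \<in> J X \<longleftrightarrow> \<tau> X \<in> snd (snd (addfo i p m ! (q - 1))))"
  proof (intro ballI)
    fix X q assume X: "X \<in> F2" and q: "q \<in> univ w"
    then have "q - 1 < length m" using l by (auto simp: univ_def)
    then have "snd (snd (addfo i p m ! (q - 1))) = snd (snd (m ! (q - 1)))" using assms(2) by (simp add: addfo_nth)
    then show "(q \<in> J X \<longleftrightarrow> \<tau> X \<in> snd (snd (addfo i p m ! (q - 1))))" using assms(1) X q unfolding rep_def by simp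
  qed
  show ?thesis using A B C unfolding rep_def by blast
qed

lemma rep_addso:
  assumes "rep m w I J \<sigma> \<tau> F1 (F2 - {X})" "length bs = length m" "Y \<notin> \<tau> ` (F2 - {X})"
    "\<forall>p\<in>univ w. (p \<in> S \<longleftrightarrow> bs!(p - 1))" "Y \<notin> soidx m"
  shows "rep (addso Y bs m) w I (J(X := S)) \<sigma> (\<tau>(X := Y)) F1 F2"
proof -
  have l: "length m = length w" using assms(1) unfolding rep_def by (metis length_map)
  have A: "map fst (addso Y bs m) = w" using assms(1,2) unfolding rep_def by simp
  have B: "\<forall>y\<in>F1. I y \<in> univ w \<and> \<sigma> y \<in> fst (snd (addso Y bs m ! (I y - 1)))"
  proof
    fix y assume y: "y \<in> F1"
    then have r: "I y \<in> univ w" "\<sigma> y \<in> fst (snd (m!(I y - 1)))" using assms(1) unfolding rep_def by auto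
    then have "I y - 1 < length m" using l by (auto simp: univ_def)
    then show "I y \<in> univ w \<and> \<sigma> y \<in> fst (snd (addso Y bs m ! (I y - 1)))" using r assms(2) by (simp add: addso_nth)
  qed
  have C: "\<forall>Z\<in>F2. \<forall>q\<in>univ w. (q \<in> (J(X := S)) Z \<longleftrightarrow> (\<tau>(X := Y)) Z \<in> snd (snd (addso Y bs m ! (q - 1))))"
  proof (intro ballI)
    fix Z q assume Z: "Z \<in> F2" and q: "q \<in> univ w"
    then have ql: "q - 1 < length m" using l by (auto simp: univ_def)
    have Ym: "Y \<notin> snd (snd (m ! (q - 1)))" using assms(5) ql unfolding soidx_def by (meson UN_I nth_mem)
    show "(q \<in> (J(X := S)) Z \<longleftrightarrow> (\<tau>(X := Y)) Z \<in> snd (snd (addso Y bs m ! (q - 1))))"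
    proof (cases "Z = X")
      case True then show ?thesis using assms(2,4) ql q Ym by (simp add: addso_nth)
    next
      case False
      then have "\<tau> Z \<noteq> Y" using assms(3) Z by auto
      then show ?thesis using False assms(1,2) ql q Z unfolding rep_def by (simp add: addso_nth)
    qed
  qed
  show ?thesis using A B C unfolding rep_def by blast
qed

lemma sound:
  assumes "eqv K1 K2 q U1 U2 m m'" "qrank f \<le> q" "wfm m" "wfm m'" "foidx m \<subseteq> U1" "foidx m' \<subseteq> U1"
    "soidx m \<subseteq> U2" "soidx m' \<subseteq> U2" "q \<le> card ({..<K1} - U1)" "q \<le> card ({..<K2} - U2)"
    "\<tau> ` fv2 f \<subseteq> U2" "rep m w I J \<sigma> \<tau> (fv1 f) (fv2 f)" "rep m' w' I' J' \<sigma> \<tau> (fv1 f) (fv2 f)"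
  shows "sat w I J f = sat w' I' J' f"
  using assms
proof (induction f arbitrary: q U1 U2 m m' w w' I I' J J' \<sigma> \<tau>)
  case (Less x y)
  have at: "atom m = atom m'" using Less.prems(1) by (rule eqv_atom)
  show ?case using two_pos[OF at Less.prems(3,4,12,13), of x y] by simp
next
  case (Eq x y)
  have at: "atom m = atom m'" using Eq.prems(1) by (rule eqv_atom)
  show ?case using two_pos[OF at Eq.prems(3,4,12,13), of x y] by simp
next
  case (Lab a x)
  have at: "atom m = atom m'" using Lab.prems(1) by (rule eqv_atom)
  have c: "m!(I x - 1) = m'!(I' x - 1)" using two_pos[OF at Lab.prems(3,4,12,13), of x x] by simp
  have r: "I x - 1 < length m \<and> I x = Suc (I x - 1) \<and> length m = length w"
    using rep_pos[OF Lab.prems(12), of x] by simp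
  have r': "I' x - 1 < length m' \<and> I' x = Suc (I' x - 1) \<and> length m' = length w'"
    using rep_pos[OF Lab.prems(13), of x] by simp
  have w: "w = map fst m" "w' = map fst m'" using Lab.prems(12,13) unfolding rep_def by auto
  have u: "I x \<in> univ w" "I' x \<in> univ w'" using Lab.prems(12,13) unfolding rep_def by auto
  show ?case using c r r' w u by simp
next
  case (Mem x X)
  have at: "atom m = atom m'" using Mem.prems(1) by (rule eqv_atom)
  have c: "m!(I x - 1) = m'!(I' x - 1)" using two_pos[OF at Mem.prems(3,4,12,13), of x x] by simp
  have u: "I x \<in> univ w" "I' x \<in> univ w'" using Mem.prems(12,13) unfolding rep_def by auto
  have "I x \<in> J X \<longleftrightarrow> \<tau> X \<in> snd (snd (m!(I x - 1)))" using Mem.prems(12) u unfolding rep_def by simp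
  moreover have "I' x \<in> J' X \<longleftrightarrow> \<tau> X \<in> snd (snd (m'!(I' x - 1)))" using Mem.prems(13) u unfolding rep_def by simp
  ultimately show ?case using c by simp
next
  case (Neg f)
  then show ?case by simp
next
  case (Conj f g)
  have "sat w I J f = sat w' I' J' f"
    apply (rule Conj.IH(1)[OF Conj.prems(1)])
    using Conj.prems by (auto intro: rep_mono)
  moreover have "sat w I J g = sat w' I' J' g"
    apply (rule Conj.IH(2)[OF Conj.prems(1)])
    using Conj.prems by (auto intro: rep_mono)
  ultimately show ?case by simp
next
  case (Ex1 x g)
  obtain q0 where q: "q = Suc q0" and qg: "qrank g \<le> q0" using Ex1.prems(2) by (cases q) auto
  have "1 \<le> card ({..<K1} - U1)" using Ex1.prems(9) q by simp
  then obtain i where i: "i < K1" "i \<notin> U1" using fresh_card by blast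
  note E = Ex1.prems(1)[unfolded q eqv.simps(2)[of K1 K2 q0 U1 U2 m m']]
  have ci: "q0 \<le> card ({..<K1} - insert i U1)" using card_fresh[OF i] Ex1.prems(9) q by simp
  have c2: "q0 \<le> card ({..<K2} - U2)" using Ex1.prems(10) q by simp
  have im: "i \<notin> foidx m" "i \<notin> foidx m'" using i Ex1.prems(5,6) by auto
  have l: "length m = length w" "length m' = length w'" using Ex1.prems(12,13) unfolding rep_def by (metis length_map)+
  have R: "rep m w I J \<sigma> \<tau> (fv1 g - {x}) (fv2 g)" "rep m' w' I' J' \<sigma> \<tau> (fv1 g - {x}) (fv2 g)"
    using Ex1.prems(12,13) by simp_all
  have IHa: "sat w (I(x := Suc p)) J g = sat w' (I'(x := Suc p')) J' g"
    if pp: "p < length m" "p' < length m'" and e: "eqv K1 K2 q0 (insert i U1) U2 (addfo i p m) (addfo i p' m')" for p p'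
    apply (rule Ex1.IH[where \<sigma>="\<sigma>(x:=i)" and I="I(x := Suc p)" and I'="I'(x := Suc p')", OF e qg])
    using wfm_addfo[OF Ex1.prems(3) im(1) pp(1)] apply simp
    using wfm_addfo[OF Ex1.prems(4) im(2) pp(2)] apply simp
    using foidx_addfo[OF pp(1), of i] Ex1.prems(5) apply blast
    using foidx_addfo[OF pp(2), of i] Ex1.prems(6) apply blast
    using soidx_addfo[OF pp(1), of i] Ex1.prems(7) apply blast
    using soidx_addfo[OF pp(2), of i] Ex1.prems(8) apply blast
    using ci apply simp
    using c2 apply simp
    using Ex1.prems(11) apply simp
    apply (rule rep_addfo[OF R(1) pp(1)])
    apply (rule rep_addfo[OF R(2) pp(2)])
    done
  show ?case
  proof
    assume "sat w I J (Ex1 x g)"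
    then obtain u where u: "u \<in> univ w" "sat w (I(x := u)) J g" by auto
    define p where "p = u - 1"
    have pl: "p < length m" "u = Suc p" using u l by (auto simp: p_def univ_def)
    then obtain p' where p': "p' < length m'" "eqv K1 K2 q0 (insert i U1) U2 (addfo i p m) (addfo i p' m')"
      using E i by blast
    have "sat w' (I'(x := Suc p')) J' g" using IHa[OF pl(1) p'(1) p'(2)] u pl by simp
    moreover have "Suc p' \<in> univ w'" using p' l by (simp add: univ_def)
    ultimately show "sat w' I' J' (Ex1 x g)" by auto
  next
    assume "sat w' I' J' (Ex1 x g)"
    then obtain u where u: "u \<in> univ w'" "sat w' (I'(x := u)) J' g" by auto
    define p where "p = u - 1"
    have pl: "p < length m'" "u = Suc p" using u l by (auto simp: p_def univ_def)
    then obtain p' where p': "p' < length m" "eqv K1 K2 q0 (insert i U1) U2 (addfo i p' m) (addfo i p m')"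
      using E i by blast
    have "sat w (I(x := Suc p')) J g" using IHa[OF p'(1) pl(1) p'(2)] u pl by simp
    moreover have "Suc p' \<in> univ w" using p' l by (simp add: univ_def)
    ultimately show "sat w I J (Ex1 x g)" by auto
  qed
next
  case (Ex2 X g)
  obtain q0 where q: "q = Suc q0" and qg: "qrank g \<le> q0" using Ex2.prems(2) by (cases q) auto
  have "1 \<le> card ({..<K2} - U2)" using Ex2.prems(10) q by simp
  then obtain Y where Y: "Y < K2" "Y \<notin> U2" using fresh_card by blast
  note E = Ex2.prems(1)[unfolded q eqv.simps(2)[of K1 K2 q0 U1 U2 m m']]
  have ci: "q0 \<le> card ({..<K2} - insert Y U2)" using card_fresh[OF Y] Ex2.prems(10) q by simp
  have c1: "q0 \<le> card ({..<K1} - U1)" using Ex2.prems(9) q by simp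
  have Ym: "Y \<notin> soidx m" "Y \<notin> soidx m'" using Y Ex2.prems(7,8) by auto
  have l: "length m = length w" "length m' = length w'" using Ex2.prems(12,13) unfolding rep_def by (metis length_map)+
  have R: "rep m w I J \<sigma> \<tau> (fv1 g) (fv2 g - {X})" "rep m' w' I' J' \<sigma> \<tau> (fv1 g) (fv2 g - {X})"
    using Ex2.prems(12,13) by simp_all
  have Yt: "Y \<notin> \<tau> ` (fv2 g - {X})" using Ex2.prems(11) Y by auto
  have IHa: "sat w I (J(X := S)) g = sat w' I' (J'(X := S')) g"
    if bl: "length bs = length m" "length bs' = length m'" and e: "eqv K1 K2 q0 U1 (insert Y U2) (addso Y bs m) (addso Y bs' m')"
      and S: "\<forall>p\<in>univ w. (p \<in> S \<longleftrightarrow> bs!(p - 1))" and S': "\<forall>p\<in>univ w'. (p \<in> S' \<longleftrightarrow> bs'!(p - 1))" for bs bs' S S'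
    apply (rule Ex2.IH[where \<tau>="\<tau>(X:=Y)" and J="J(X := S)" and J'="J'(X := S')", OF e qg])
    using wfm_addso[OF Ex2.prems(3) bl(1)] apply simp
    using wfm_addso[OF Ex2.prems(4) bl(2)] apply simp
    using foidx_addso[OF bl(1), of Y] Ex2.prems(5) apply blast
    using foidx_addso[OF bl(2), of Y] Ex2.prems(6) apply blast
    using soidx_addso[OF bl(1), of Y] Ex2.prems(7) apply blast
    using soidx_addso[OF bl(2), of Y] Ex2.prems(8) apply blast
    using c1 apply simp
    using ci apply simp
    using Ex2.prems(11) apply auto[1]
    apply (rule rep_addso[OF R(1) bl(1) Yt S Ym(1)])
    apply (rule rep_addso[OF R(2) bl(2) Yt S' Ym(2)])
    done
  show ?case
  proof
    assume "sat w I J (Ex2 X g)"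
    then obtain S where S: "S \<subseteq> univ w" "sat w I (J(X := S)) g" by auto
    define bs where "bs = map (\<lambda>k. Suc k \<in> S) [0..<length m]"
    have bl: "length bs = length m" by (simp add: bs_def)
    have Sb: "\<forall>p\<in>univ w. (p \<in> S \<longleftrightarrow> bs!(p - 1))" using l by (auto simp: bs_def univ_def)
    obtain bs' where b': "length bs' = length m'" "eqv K1 K2 q0 U1 (insert Y U2) (addso Y bs m) (addso Y bs' m')"
      using E Y bl by blast
    define S' where "S' = {p\<in>univ w'. bs'!(p - 1)}"
    have Sb': "\<forall>p\<in>univ w'. (p \<in> S' \<longleftrightarrow> bs'!(p - 1))" by (simp add: S'_def)
    have "sat w' I' (J'(X := S')) g" using IHa[OF bl b'(1) b'(2) Sb Sb'] S by simp
    moreover have "S' \<subseteq> univ w'" by (auto simp: S'_def)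
    ultimately show "sat w' I' J' (Ex2 X g)" by auto
  next
    assume "sat w' I' J' (Ex2 X g)"
    then obtain S where S: "S \<subseteq> univ w'" "sat w' I' (J'(X := S)) g" by auto
    define bs where "bs = map (\<lambda>k. Suc k \<in> S) [0..<length m']"
    have bl: "length bs = length m'" by (simp add: bs_def)
    have Sb: "\<forall>p\<in>univ w'. (p \<in> S \<longleftrightarrow> bs!(p - 1))" using l by (auto simp: bs_def univ_def)
    obtain bs' where b': "length bs' = length m" "eqv K1 K2 q0 U1 (insert Y U2) (addso Y bs' m) (addso Y bs m')"
      using E Y bl by blast
    define S' where "S' = {p\<in>univ w. bs'!(p - 1)}"
    have Sb': "\<forall>p\<in>univ w. (p \<in> S' \<longleftrightarrow> bs'!(p - 1))" by (simp add: S'_def)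
    have "sat w I (J(X := S')) g" using IHa[OF b'(1) bl b'(2) Sb' Sb] S by simp
    moreover have "S' \<subseteq> univ w" by (auto simp: S'_def)
    ultimately show "sat w I J (Ex2 X g)" by auto
  qed
qed


definition Good :: "nat set \<Rightarrow> nat set \<Rightarrow> nat set \<Rightarrow> cell list \<Rightarrow> bool" where
  "Good \<Sigma> U1 U2 m \<longleftrightarrow> wfm m \<and> set (map fst m) \<subseteq> \<Sigma> \<and> foidx m \<subseteq> U1 \<and> soidx m \<subseteq> U2"

definition cls :: "nat \<Rightarrow> nat \<Rightarrow> nat set \<Rightarrow> nat \<Rightarrow> nat set \<Rightarrow> nat set \<Rightarrow> cell list \<Rightarrow> cell list set" where
  "cls K1 K2 \<Sigma> q U1 U2 m = {m'. Good \<Sigma> U1 U2 m' \<and> eqv K1 K2 q U1 U2 m m'}"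

lemma cls_eq_iff: "Good \<Sigma> U1 U2 m \<Longrightarrow> Good \<Sigma> U1 U2 m' \<Longrightarrow>
   cls K1 K2 \<Sigma> q U1 U2 m = cls K1 K2 \<Sigma> q U1 U2 m' \<longleftrightarrow> eqv K1 K2 q U1 U2 m m'"
proof
  assume g: "Good \<Sigma> U1 U2 m" "Good \<Sigma> U1 U2 m'" and c: "cls K1 K2 \<Sigma> q U1 U2 m = cls K1 K2 \<Sigma> q U1 U2 m'"
  have "m' \<in> cls K1 K2 \<Sigma> q U1 U2 m'" using g by (simp add: cls_def eqv_refl)
  then have "m' \<in> cls K1 K2 \<Sigma> q U1 U2 m" using c by simp
  then show "eqv K1 K2 q U1 U2 m m'" by (simp add: cls_def)
next
  assume g: "Good \<Sigma> U1 U2 m" "Good \<Sigma> U1 U2 m'" and e: "eqv K1 K2 q U1 U2 m m'"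
  show "cls K1 K2 \<Sigma> q U1 U2 m = cls K1 K2 \<Sigma> q U1 U2 m'"
    unfolding cls_def using e eqv_sym eqv_trans by blast
qed

lemma finite_factor:
  assumes "\<And>x y. x \<in> S \<Longrightarrow> y \<in> S \<Longrightarrow> g x = g y \<Longrightarrow> f x = f y" "finite (g ` S)"
  shows "finite (f ` S)"
proof -
  define F where "F v = f (SOME x. x \<in> S \<and> g x = v)" for v
  have "f ` S \<subseteq> F ` (g ` S)"
  proof
    fix z assume "z \<in> f ` S"
    then obtain x where x: "x \<in> S" "z = f x" by auto
    have "\<exists>x'. x' \<in> S \<and> g x' = g x" using x by blast
    then have s: "(SOME x'. x' \<in> S \<and> g x' = g x) \<in> S \<and> g (SOME x'. x' \<in> S \<and> g x' = g x) = g x"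
      by (rule someI_ex)
    then have "F (g x) = f x" unfolding F_def using assms(1) x(1) by blast
    then show "z \<in> F ` (g ` S)" using x by (metis image_eqI)
  qed
  then show ?thesis using assms(2) finite_surj by blast
qed

lemma atom_len:
  assumes "wfm m" "foidx m \<subseteq> U1" "finite U1"
  shows "length (atom m) \<le> card U1"
proof -
  define pick where "pick k = (SOME i. i \<in> fst (snd (atom m ! k)))" for k
  have mem: "pick k \<in> fst (snd (atom m ! k)) \<and> (\<exists>p<length m. Pc (m!p) \<and> cnt m p = k \<and> atom m ! k = m!p)"
    if k: "k < length (atom m)" for k
  proof -
    obtain p where p: "p < length m" "Pc (m!p)" "cnt m p = k" using L2 k by blast
    have "atom m ! k = m!p" using L1 p by blast
    moreover have "fst (snd (atom m ! k)) \<noteq> {}" using p calculation by (simp add: Pc_def)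
    ultimately show ?thesis unfolding pick_def using p by (metis (mono_tags) ex_in_conv someI_ex)
  qed
  have inj: "inj_on pick {..<length (atom m)}"
  proof (rule inj_onI)
    fix k k' assume k: "k \<in> {..<length (atom m)}" and k': "k' \<in> {..<length (atom m)}" and e: "pick k = pick k'"
    obtain p where p: "p<length m" "Pc (m!p)" "cnt m p = k" "atom m ! k = m!p" using mem k by auto
    obtain p' where p': "p'<length m" "Pc (m!p')" "cnt m p' = k'" "atom m ! k' = m!p'" using mem k' by auto
    have kl: "k < length (atom m)" "k' < length (atom m)" using k k' by auto
    have "pick k \<in> fst (snd (atom m ! k))" using mem[OF kl(1)] by blast
    then have a: "pick k \<in> fst (snd (m!p))" using p(4) by simp
    have "pick k' \<in> fst (snd (atom m ! k'))" using mem[OF kl(2)] by blast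
    then have b: "pick k \<in> fst (snd (m!p'))" using p'(4) e by simp
    from a b have "p = p'" using assms(1) p p' unfolding wfm_def by blast
    then show "k = k'" using p p' by simp
  qed
  have sub: "pick ` {..<length (atom m)} \<subseteq> U1"
  proof
    fix z assume "z \<in> pick ` {..<length (atom m)}"
    then obtain k where k: "k < length (atom m)" "z = pick k" by auto
    then obtain p where p: "p<length m" "atom m ! k = m!p" using mem by blast
    have "pick k \<in> fst (snd (atom m ! k))" using mem[OF k(1)] by blast
    then have "z \<in> fst (snd (m!p))" using k(2) p(2) by simp
    then show "z \<in> U1" using assms(2) p(1) unfolding foidx_def by (meson UN_I nth_mem subsetD)
  qed
  have "card (pick ` {..<length (atom m)}) = length (atom m)" using inj by (simp add: card_image)
  then show ?thesis using card_mono[OF assms(3) sub] by simp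
qed

lemma atom_set: "set (atom m) \<subseteq> set m"
  by (auto simp: atom_def)

lemma Good_addfo: "Good \<Sigma> U1 U2 m \<Longrightarrow> i \<notin> U1 \<Longrightarrow> p < length m \<Longrightarrow> Good \<Sigma> (insert i U1) U2 (addfo i p m)"
  unfolding Good_def using wfm_addfo foidx_addfo soidx_addfo by (metis addfo_fst insert_mono order_trans subsetD)

lemma Good_addso: "Good \<Sigma> U1 U2 m \<Longrightarrow> X \<notin> U2 \<Longrightarrow> length bs = length m \<Longrightarrow> Good \<Sigma> U1 (insert X U2) (addso X bs m)"
  unfolding Good_def using wfm_addso foidx_addso soidx_addso by (metis addso_fst insert_mono order_trans subsetD)

lemma finite_atoms:
  assumes "finite \<Sigma>" "finite U1" "finite U2"
  shows "finite (atom ` {m. Good \<Sigma> U1 U2 m})"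
proof -
  have "atom ` {m. Good \<Sigma> U1 U2 m} \<subseteq> {l. set l \<subseteq> \<Sigma> \<times> Pow U1 \<times> Pow U2 \<and> length l \<le> card U1}"
  proof
    fix l assume "l \<in> atom ` {m. Good \<Sigma> U1 U2 m}"
    then obtain m where m: "Good \<Sigma> U1 U2 m" "l = atom m" by auto
    have "length l \<le> card U1" using atom_len m assms(2) unfolding Good_def by blast
    moreover have "set l \<subseteq> \<Sigma> \<times> Pow U1 \<times> Pow U2"
    proof
      fix c assume "c \<in> set l"
      then have c: "c \<in> set m" using m atom_set by blast
      then have "fst c \<in> \<Sigma>" using m unfolding Good_def by auto
      moreover have "fst (snd c) \<subseteq> U1" using m c unfolding Good_def foidx_def by auto
      moreover have "snd (snd c) \<subseteq> U2" using m c unfolding Good_def soidx_def by auto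
      ultimately show "c \<in> \<Sigma> \<times> Pow U1 \<times> Pow U2" by (cases c) auto
    qed
    ultimately show "l \<in> {l. set l \<subseteq> \<Sigma> \<times> Pow U1 \<times> Pow U2 \<and> length l \<le> card U1}" by simp
  qed
  moreover have "finite {l. set l \<subseteq> \<Sigma> \<times> Pow U1 \<times> Pow U2 \<and> length l \<le> card U1}"
    using assms by (intro finite_lists_length_le) auto
  ultimately show ?thesis by (rule finite_subset)
qed

lemma finite_cls:
  "finite \<Sigma> \<Longrightarrow> finite U1 \<Longrightarrow> finite U2 \<Longrightarrow> finite (cls K1 K2 \<Sigma> q U1 U2 ` {m. Good \<Sigma> U1 U2 m})"
proof (induction q arbitrary: U1 U2)
  case 0
  show ?case
  proof (rule finite_factor[where g = atom])
    fix x y assume "x \<in> {m. Good \<Sigma> U1 U2 m}" "y \<in> {m. Good \<Sigma> U1 U2 m}" "atom x = atom y"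
    then show "cls K1 K2 \<Sigma> 0 U1 U2 x = cls K1 K2 \<Sigma> 0 U1 U2 y" using cls_eq_iff by simp
  next
    show "finite (atom ` {m. Good \<Sigma> U1 U2 m})" using finite_atoms 0 by blast
  qed
next
  case (Suc q)
  define FO where "FO m = {(i, cls K1 K2 \<Sigma> q (insert i U1) U2 (addfo i p m)) | i p. i < K1 \<and> i \<notin> U1 \<and> p < length m}" for m
  define SO where "SO m = {(X, cls K1 K2 \<Sigma> q U1 (insert X U2) (addso X bs m)) | X bs. X < K2 \<and> X \<notin> U2 \<and> length bs = length m}" for m
  define FOS where "FOS = (\<Union>i\<in>{..<K1}. {i} \<times> (cls K1 K2 \<Sigma> q (insert i U1) U2 ` {m. Good \<Sigma> (insert i U1) U2 m}))"
  define SOS where "SOS = (\<Union>X\<in>{..<K2}. {X} \<times> (cls K1 K2 \<Sigma> q U1 (insert X U2) ` {m. Good \<Sigma> U1 (insert X U2) m}))"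
  show ?case
  proof (rule finite_factor[where g = "\<lambda>m. (atom m, FO m, SO m)"])
    fix x y assume x: "x \<in> {m. Good \<Sigma> U1 U2 m}" and y: "y \<in> {m. Good \<Sigma> U1 U2 m}"
      and e: "(atom x, FO x, SO x) = (atom y, FO y, SO y)"
    have gx: "Good \<Sigma> U1 U2 x" and gy: "Good \<Sigma> U1 U2 y" using x y by auto
    have B: "\<forall>i. i < K1 \<and> i \<notin> U1 \<longrightarrow>
      (\<forall>p<length x. \<exists>p'<length y. eqv K1 K2 q (insert i U1) U2 (addfo i p x) (addfo i p' y)) \<and>
      (\<forall>p'<length y. \<exists>p<length x. eqv K1 K2 q (insert i U1) U2 (addfo i p x) (addfo i p' y))"
    proof (intro allI impI conjI)
      fix i p assume i: "i < K1 \<and> i \<notin> U1" and p: "p < length x"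
      then have "(i, cls K1 K2 \<Sigma> q (insert i U1) U2 (addfo i p x)) \<in> FO y" using e unfolding FO_def by blast
      then obtain p' where p': "p' < length y" "cls K1 K2 \<Sigma> q (insert i U1) U2 (addfo i p x) = cls K1 K2 \<Sigma> q (insert i U1) U2 (addfo i p' y)"
        unfolding FO_def by blast
      have "eqv K1 K2 q (insert i U1) U2 (addfo i p x) (addfo i p' y)"
        using p'(2) cls_eq_iff Good_addfo gx gy i p p'(1) by blast
      then show "\<exists>p'<length y. eqv K1 K2 q (insert i U1) U2 (addfo i p x) (addfo i p' y)" using p' by blast
    next
      fix i p assume i: "i < K1 \<and> i \<notin> U1" and p: "p < length y"
      then have "(i, cls K1 K2 \<Sigma> q (insert i U1) U2 (addfo i p y)) \<in> FO x" using e unfolding FO_def by blast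
      then obtain p' where p': "p' < length x" "cls K1 K2 \<Sigma> q (insert i U1) U2 (addfo i p y) = cls K1 K2 \<Sigma> q (insert i U1) U2 (addfo i p' x)"
        unfolding FO_def by blast
      have "eqv K1 K2 q (insert i U1) U2 (addfo i p' x) (addfo i p y)"
        using p'(2) cls_eq_iff Good_addfo gx gy i p p'(1) by metis
      then show "\<exists>p'<length x. eqv K1 K2 q (insert i U1) U2 (addfo i p' x) (addfo i p y)" using p' by blast
    qed
    have C: "\<forall>X. X < K2 \<and> X \<notin> U2 \<longrightarrow>
      (\<forall>bs. length bs = length x \<longrightarrow> (\<exists>bs'. length bs' = length y \<and> eqv K1 K2 q U1 (insert X U2) (addso X bs x) (addso X bs' y))) \<and>
      (\<forall>bs'. length bs' = length y \<longrightarrow> (\<exists>bs. length bs = length x \<and> eqv K1 K2 q U1 (insert X U2) (addso X bs x) (addso X bs' y)))"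
    proof (intro allI impI conjI)
      fix X and bs :: "bool list" assume i: "X < K2 \<and> X \<notin> U2" and p: "length bs = length x"
      then have "(X, cls K1 K2 \<Sigma> q U1 (insert X U2) (addso X bs x)) \<in> SO y" using e unfolding SO_def by blast
      then obtain bs' where p': "length bs' = length y" "cls K1 K2 \<Sigma> q U1 (insert X U2) (addso X bs x) = cls K1 K2 \<Sigma> q U1 (insert X U2) (addso X bs' y)"
        unfolding SO_def by blast
      have "eqv K1 K2 q U1 (insert X U2) (addso X bs x) (addso X bs' y)"
        using p'(2) cls_eq_iff Good_addso gx gy i p p'(1) by blast
      then show "\<exists>bs'. length bs' = length y \<and> eqv K1 K2 q U1 (insert X U2) (addso X bs x) (addso X bs' y)" using p' by blast
    next
      fix X and bs :: "bool list" assume i: "X < K2 \<and> X \<notin> U2" and p: "length bs = length y"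
      then have "(X, cls K1 K2 \<Sigma> q U1 (insert X U2) (addso X bs y)) \<in> SO x" using e unfolding SO_def by blast
      then obtain bs' where p': "length bs' = length x" "cls K1 K2 \<Sigma> q U1 (insert X U2) (addso X bs y) = cls K1 K2 \<Sigma> q U1 (insert X U2) (addso X bs' x)"
        unfolding SO_def by blast
      have "eqv K1 K2 q U1 (insert X U2) (addso X bs' x) (addso X bs y)"
        using p'(2) cls_eq_iff Good_addso gx gy i p p'(1) by metis
      then show "\<exists>bs'. length bs' = length x \<and> eqv K1 K2 q U1 (insert X U2) (addso X bs' x) (addso X bs y)" using p' by blast
    qed
    have "eqv K1 K2 (Suc q) U1 U2 x y" using e B C by (simp only: eqv.simps(2)) simp
    then show "cls K1 K2 \<Sigma> (Suc q) U1 U2 x = cls K1 K2 \<Sigma> (Suc q) U1 U2 y" using cls_eq_iff gx gy by blast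
  next
    have fFOS: "finite FOS" unfolding FOS_def using Suc by auto
    have fSOS: "finite SOS" unfolding SOS_def using Suc by auto
    have "(\<lambda>m. (atom m, FO m, SO m)) ` {m. Good \<Sigma> U1 U2 m} \<subseteq> (atom ` {m. Good \<Sigma> U1 U2 m}) \<times> Pow FOS \<times> Pow SOS"
    proof
      fix z assume "z \<in> (\<lambda>m. (atom m, FO m, SO m)) ` {m. Good \<Sigma> U1 U2 m}"
      then obtain m where m: "Good \<Sigma> U1 U2 m" "z = (atom m, FO m, SO m)" by auto
      have "FO m \<subseteq> FOS" unfolding FO_def FOS_def using Good_addfo[OF m(1)] by blast
      moreover have "SO m \<subseteq> SOS" unfolding SO_def SOS_def using Good_addso[OF m(1)] by blast
      ultimately show "z \<in> (atom ` {m. Good \<Sigma> U1 U2 m}) \<times> Pow FOS \<times> Pow SOS" using m by auto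
    qed
    moreover have "finite ((atom ` {m. Good \<Sigma> U1 U2 m}) \<times> Pow FOS \<times> Pow SOS)"
      using finite_atoms Suc.prems fFOS fSOS by blast
    ultimately show "finite ((\<lambda>m. (atom m, FO m, SO m)) ` {m. Good \<Sigma> U1 U2 m})" by (rule finite_subset)
  qed
qed

definition plain :: "cell list \<Rightarrow> bool" where
  "plain B \<longleftrightarrow> (\<forall>c\<in>set B. fst (snd c) = {} \<and> snd (snd c) = {})"

definition pw :: "cell list \<Rightarrow> nat \<Rightarrow> cell list" where
  "pw B k = concat (replicate k B)"

lemma pw_add: "pw B (a + b) = pw B a @ pw B b"
  by (simp add: pw_def replicate_add)

lemma Good_pw: "set (map fst B) \<subseteq> \<Sigma> \<Longrightarrow> plain B \<Longrightarrow> Good \<Sigma> U1 U2 (pw B k)"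
proof -
  assume a: "set (map fst B) \<subseteq> \<Sigma>" "plain B"
  have s: "set (pw B k) \<subseteq> set B" by (auto simp: pw_def)
  have "\<forall>c\<in>set (pw B k). fst (snd c) = {} \<and> snd (snd c) = {}" using a(2) s unfolding plain_def by blast
  moreover have "set (map fst (pw B k)) \<subseteq> \<Sigma>" using a(1) s by auto
  ultimately show ?thesis unfolding Good_def wfm_def foidx_def soidx_def by (auto dest!: nth_mem)
qed

lemma pump_exists:
  assumes "finite \<Sigma>" "finite U1" "finite U2" "set (map fst B) \<subseteq> \<Sigma>" "plain B"
  shows "\<exists>i j. i < j \<and> j \<le> card (cls K1 K2 \<Sigma> q U1 U2 ` {m. Good \<Sigma> U1 U2 m}) \<and> eqv K1 K2 q U1 U2 (pw B i) (pw B j)"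
proof -
  define N where "N = card (cls K1 K2 \<Sigma> q U1 U2 ` {m. Good \<Sigma> U1 U2 m})"
  define f where "f k = cls K1 K2 \<Sigma> q U1 U2 (pw B k)" for k
  have sub: "f ` {0..N} \<subseteq> cls K1 K2 \<Sigma> q U1 U2 ` {m. Good \<Sigma> U1 U2 m}"
    unfolding f_def using Good_pw[OF assms(4,5)] by blast
  have fin: "finite (cls K1 K2 \<Sigma> q U1 U2 ` {m. Good \<Sigma> U1 U2 m})" using finite_cls assms(1-3) by blast
  have "card (f ` {0..N}) \<le> N" using card_mono[OF fin sub] by (simp add: N_def)
  then have "card (f ` {0..N}) < card {0..N}" by simp
  then have "\<not> inj_on f {0..N}" by (rule pigeonhole)
  then obtain a b where ab: "a \<in> {0..N}" "b \<in> {0..N}" "a \<noteq> b" "f a = f b" unfolding inj_on_def by blast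
  define i where "i = min a b"
  define j where "j = max a b"
  have ij: "i < j" "j \<le> N" "f i = f j" using ab by (auto simp: i_def j_def min_def max_def)
  have "eqv K1 K2 q U1 U2 (pw B i) (pw B j)"
    using ij(3) cls_eq_iff Good_pw[OF assms(4,5)] unfolding f_def by blast
  then show ?thesis using ij N_def by blast
qed

lemma pump:
  assumes "finite \<Sigma>" "finite U1" "finite U2" "set (map fst B) \<subseteq> \<Sigma>" "plain B"
    "card (cls K1 K2 \<Sigma> q U1 U2 ` {m. Good \<Sigma> U1 U2 m}) \<le> NB" "NB \<le> m" "fact NB dvd k"
  shows "eqv K1 K2 q U1 U2 (pw B m) (pw B (m + k))"
proof -
  obtain i j where ij: "i < j" "j \<le> card (cls K1 K2 \<Sigma> q U1 U2 ` {m. Good \<Sigma> U1 U2 m})" "eqv K1 K2 q U1 U2 (pw B i) (pw B j)"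
    using pump_exists[OF assms(1-5)] by blast
  define d where "d = j - i"
  have d: "1 \<le> d" "d \<le> NB" using ij assms(6) by (auto simp: d_def)
  then have "d dvd fact NB" by (rule dvd_fact)
  then obtain c where c: "k = d * c" using assms(8) by (metis dvd_trans dvdE)
  have step: "eqv K1 K2 q U1 U2 (pw B (i + x)) (pw B (j + x))" for x
    unfolding pw_add by (rule eqv_append[OF ij(3) eqv_refl])
  have "eqv K1 K2 q U1 U2 (pw B m) (pw B (m + d * c'))" for c'
  proof (induction c')
    case 0 then show ?case by (simp add: eqv_refl)
  next
    case (Suc c')
    have "i \<le> m + d * c'" using ij assms(6,7) by linarith
    then have e1: "i + (m + d * c' - i) = m + d * c'" "j + (m + d * c' - i) = m + d * Suc c'"
      using ij(1) by (auto simp: d_def)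
    have "eqv K1 K2 q U1 U2 (pw B (m + d * c')) (pw B (m + d * Suc c'))"
      using step[of "m + d * c' - i"] unfolding e1 .
    then show ?case using Suc.IH eqv_trans by blast
  qed
  then show ?thesis using c by simp
qed


abbreviation Zc :: cell where "Zc \<equiv> (0, {}, {})"
abbreviation Oc :: cell where "Oc \<equiv> (1, {}, {})"

definition Bc :: "nat \<Rightarrow> cell list" where "Bc D = Oc # replicate (D - 1) Zc"

lemma mod_shift_ne: "(s::nat) mod D = r \<Longrightarrow> 0 < t \<Longrightarrow> t < D \<Longrightarrow> (s + t) mod D \<noteq> r"
proof
  assume a: "s mod D = r" "0 < t" "t < D" "(s + t) mod D = r"
  then have "(s + t) mod D = s mod D" by simp
  then have "D dvd (s + t) - s" using mod_eq_dvd_iff_nat[of s "s + t" D] by simp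
  then have "D dvd t" by simp
  then show False using a(2,3) by (simp add: nat_dvd_not_less)
qed

lemma map_upt_split: "map F [s..<s + (x + y)] = map F [s..<s + x] @ map F [s + x..<s + x + y]"
proof -
  have "[s..<s + (x + y)] = [s..<s + x] @ [s + x..<s + x + y]"
    using upt_add_eq_append[of s "s + x" y] by (simp add: add.assoc)
  then show ?thesis by simp
qed

lemma map_zeros: "(\<And>p. s \<le> p \<Longrightarrow> p < s + l \<Longrightarrow> F p = c) \<Longrightarrow> map F [s..<s + l] = replicate l c"
  by (rule replicate_eqI) auto

lemma block_period:
  assumes "1 \<le> D" "s mod D = r" "\<And>p. s \<le> p \<Longrightarrow> p < s + D \<Longrightarrow> F p = (if p mod D = r then Oc else Zc)"
  shows "map F [s..<s + D] = Bc D"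
proof -
  have u: "[s..<s + D] = s # [s + 1..<s + 1 + (D - 1)]" using assms(1) by (simp add: upt_conv_Cons)
  have "F s = Oc" using assms by simp
  moreover have "map F [s + 1..<s + 1 + (D - 1)] = replicate (D - 1) Zc"
  proof (rule map_zeros)
    fix p assume p: "s + 1 \<le> p" "p < s + 1 + (D - 1)"
    then have "(s + (p - s)) mod D \<noteq> r" using mod_shift_ne[OF assms(2), of "p - s"] by simp
    then show "F p = Zc" using assms(3)[of p] p by simp
  qed
  ultimately show ?thesis using u by (simp add: Bc_def)
qed

lemma block_pw:
  assumes "1 \<le> D" "s mod D = r" "\<And>p. s \<le> p \<Longrightarrow> p < s + m * D \<Longrightarrow> F p = (if p mod D = r then Oc else Zc)"
  shows "map F [s..<s + m * D] = pw (Bc D) m"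
  using assms(2,3)
proof (induction m arbitrary: s)
  case 0 then show ?case by (simp add: pw_def)
next
  case (Suc m)
  have "map F [s..<s + Suc m * D] = map F [s..<s + D] @ map F [s + D..<s + D + m * D]"
    using map_upt_split[of F s D "m * D"] by (simp add: add.assoc)
  moreover have "map F [s..<s + D] = Bc D"
    by (rule block_period[OF assms(1) Suc.prems(1)]) (use Suc.prems(2) in auto)
  moreover have "map F [s + D..<s + D + m * D] = pw (Bc D) m"
    by (rule Suc.IH) (use Suc.prems in auto)
  ultimately show ?case by (simp add: pw_def)
qed

lemma marked_period:
  assumes "s mod D = r" "z + 1 < D"
    "\<And>p. s \<le> p \<Longrightarrow> p < s + D \<Longrightarrow> p \<noteq> s + 1 + z \<Longrightarrow> F p = (if p mod D = r then Oc else Zc)"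
  shows "map F [s..<s + D] = Oc # replicate z Zc @ [F (s + 1 + z)] @ replicate (D - 2 - z) Zc"
proof -
  have D: "D = 1 + (z + (1 + (D - 2 - z)))" using assms(2) by simp
  have "map F [s..<s + D] = map F [s..<s + 1] @ map F [s + 1..<s + 1 + z] @ map F [s + 1 + z..<s + 1 + z + 1]
      @ map F [s + 1 + z + 1..<s + 1 + z + 1 + (D - 2 - z)]"
    apply (subst D)
    apply (subst map_upt_split)
    apply (subst map_upt_split[of F "s + 1"])
    apply (subst map_upt_split[of F "s + 1 + z"])
    apply simp
    done
  moreover have "map F [s..<s + 1] = [Oc]" using assms(1,2) assms(3)[of s] by simp
  moreover have "map F [s + 1..<s + 1 + z] = replicate z Zc"
  proof (rule map_zeros)
    fix p assume p: "s + 1 \<le> p" "p < s + 1 + z"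
    then have "(s + (p - s)) mod D \<noteq> r" using mod_shift_ne[OF assms(1), of "p - s"] assms(2) by simp
    then show "F p = Zc" using assms(3)[of p] p assms(2) by simp
  qed
  moreover have "map F [s + 1 + z + 1..<s + 1 + z + 1 + (D - 2 - z)] = replicate (D - 2 - z) Zc"
  proof (rule map_zeros)
    fix p assume p: "s + 1 + z + 1 \<le> p" "p < s + 1 + z + 1 + (D - 2 - z)"
    then have "(s + (p - s)) mod D \<noteq> r" using mod_shift_ne[OF assms(1), of "p - s"] assms(2) by simp
    then show "F p = Zc" using assms(3)[of p] p assms(2) by simp
  qed
  ultimately show ?thesis by simp
qed

lemma mid_shape:
  assumes D: "2 \<le> D" and er: "e mod D = r" and pa: "e + m1*D < pa" "pa < e + m1*D + D"
    and pb: "e + m1*D + D < pb" "pb < e + m1*D + D + D"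
    and F: "\<And>p. e \<le> p \<Longrightarrow> p < e + (m1 + 2 + m2)*D \<Longrightarrow> p \<noteq> pa \<Longrightarrow> p \<noteq> pb \<Longrightarrow> F p = (if p mod D = r then Oc else Zc)"
  shows "map F [e..<e + (m1 + 2 + m2)*D] = pw (Bc D) m1
     @ (Oc # replicate (pa - (e + m1*D) - 1) Zc @ [F pa] @ replicate (D - 2 - (pa - (e + m1*D) - 1)) Zc)
     @ (Oc # replicate (pb - (e + m1*D + D) - 1) Zc @ [F pb] @ replicate (D - 2 - (pb - (e + m1*D + D) - 1)) Zc)
     @ pw (Bc D) m2"
proof -
  define s2 where "s2 = e + m1*D"
  define s3 where "s3 = s2 + D"
  define s4 where "s4 = s3 + D"
  have tot: "(m1 + 2 + m2)*D = m1*D + (D + (D + m2*D))" by (simp add: algebra_simps)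
  have split: "map F [e..<e + (m1 + 2 + m2)*D] = map F [e..<e + m1*D] @ map F [s2..<s2 + D] @ map F [s3..<s3 + D] @ map F [s4..<s4 + m2*D]"
    unfolding tot s2_def s3_def s4_def
    apply (subst map_upt_split)
    apply (subst map_upt_split[of F "e + m1*D"])
    apply (subst map_upt_split[of F "e + m1*D + D"])
    apply (simp add: add.assoc)
    done
  have r2: "s2 mod D = r" "s3 mod D = r" "s4 mod D = r" using er by (simp_all add: s2_def s3_def s4_def)
  have D1: "1 \<le> D" using D by simp
  have P1: "map F [e..<e + m1*D] = pw (Bc D) m1"
    by (rule block_pw[OF D1 er]) (use pa pb F in \<open>auto simp: algebra_simps\<close>)
  have P2: "map F [s2..<s2 + D] = Oc # replicate (pa - s2 - 1) Zc @ [F (s2 + 1 + (pa - s2 - 1))] @ replicate (D - 2 - (pa - s2 - 1)) Zc"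
    by (rule marked_period[OF r2(1)]) (use pa pb F in \<open>auto simp: s2_def algebra_simps\<close>)
  have P3: "map F [s3..<s3 + D] = Oc # replicate (pb - s3 - 1) Zc @ [F (s3 + 1 + (pb - s3 - 1))] @ replicate (D - 2 - (pb - s3 - 1)) Zc"
    by (rule marked_period[OF r2(2)]) (use pa pb F in \<open>auto simp: s2_def s3_def algebra_simps\<close>)
  have P4: "map F [s4..<s4 + m2*D] = pw (Bc D) m2"
    by (rule block_pw[OF D1 r2(3)]) (use pa pb F in \<open>auto simp: s2_def s3_def s4_def algebra_simps\<close>)
  have e2: "s2 + 1 + (pa - s2 - 1) = pa" "s3 + 1 + (pb - s3 - 1) = pb" using pa pb by (auto simp: s2_def s3_def)
  show ?thesis using split P1 P2 P3 P4 e2 by (simp add: s2_def s3_def)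
qed

lemma mids_eqv:
  assumes "eqv K1 K2 q U1 U2 (pw B m1) (pw B m1')" "eqv K1 K2 q U1 U2 (replicate z1 Zc) (replicate z1' Zc)"
    "eqv K1 K2 q U1 U2 (replicate z2 Zc) (replicate z2' Zc)" "eqv K1 K2 q U1 U2 (replicate z3 Zc) (replicate z3' Zc)"
    "eqv K1 K2 q U1 U2 (replicate z4 Zc) (replicate z4' Zc)" "eqv K1 K2 q U1 U2 (pw B m2) (pw B m2')"
  shows "eqv K1 K2 q U1 U2
    (pw B m1 @ (Oc # replicate z1 Zc @ [ca] @ replicate z2 Zc) @ (Oc # replicate z3 Zc @ [cb] @ replicate z4 Zc) @ pw B m2)
    (pw B m1' @ (Oc # replicate z1' Zc @ [ca] @ replicate z2' Zc) @ (Oc # replicate z3' Zc @ [cb] @ replicate z4' Zc) @ pw B m2')"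
proof -
  have R: "eqv K1 K2 q U1 U2 [c] [c]" for c by (rule eqv_refl)
  have p1: "eqv K1 K2 q U1 U2 ([Oc] @ replicate z1 Zc @ [ca] @ replicate z2 Zc) ([Oc] @ replicate z1' Zc @ [ca] @ replicate z2' Zc)"
    by (intro eqv_append R assms)
  have p2: "eqv K1 K2 q U1 U2 ([Oc] @ replicate z3 Zc @ [cb] @ replicate z4 Zc) ([Oc] @ replicate z3' Zc @ [cb] @ replicate z4' Zc)"
    by (intro eqv_append R assms)
  have "eqv K1 K2 q U1 U2 (pw B m1 @ ([Oc] @ replicate z1 Zc @ [ca] @ replicate z2 Zc) @ ([Oc] @ replicate z3 Zc @ [cb] @ replicate z4 Zc) @ pw B m2)
    (pw B m1' @ ([Oc] @ replicate z1' Zc @ [ca] @ replicate z2' Zc) @ ([Oc] @ replicate z3' Zc @ [cb] @ replicate z4' Zc) @ pw B m2')"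
    by (intro eqv_append p1 p2 assms)
  then show ?thesis by simp
qed

lemma pumpZ:
  assumes "finite \<Sigma>" "finite U1" "finite U2" "0 \<in> \<Sigma>"
    "card (cls K1 K2 \<Sigma> q U1 U2 ` {m. Good \<Sigma> U1 U2 m}) \<le> NB" "NB \<le> x" "fact NB dvd k"
  shows "eqv K1 K2 q U1 U2 (replicate x Zc) (replicate (x + k) Zc)"
proof -
  have "eqv K1 K2 q U1 U2 (pw [Zc] x) (pw [Zc] (x + k))"
    by (rule pump[OF assms(1-3) _ _ assms(5-7)]) (use assms(4) in \<open>auto simp: plain_def\<close>)
  then show ?thesis by (simp add: pw_def)
qed

lemma pumpB:
  assumes "finite \<Sigma>" "finite U1" "finite U2" "0 \<in> \<Sigma>" "1 \<in> \<Sigma>"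
    "card (cls K1 K2 \<Sigma> q U1 U2 ` {m. Good \<Sigma> U1 U2 m}) \<le> NB" "NB \<le> x" "fact NB dvd k"
  shows "eqv K1 K2 q U1 U2 (pw (Bc D) x) (pw (Bc D) (x + k))"
  by (rule pump[OF assms(1-3) _ _ assms(6-8)]) (use assms(4,5) in \<open>auto simp: plain_def Bc_def\<close>)


fun zans :: "nat \<Rightarrow> query \<Rightarrow> answer" where
  "zans n (QLabel p) = ALabel 0"
| "zans n (QSucc p) = APos (if p < n then Some (Suc p) else None)"
| "zans n (QPred p) = APos (if 1 < p then Some (p - 1) else None)"

fun zsim :: "algorithm \<Rightarrow> (nat \<times> nat \<times> bool) set \<Rightarrow> nat \<Rightarrow> nat \<Rightarrow> answer list" where
  "zsim A T n 0 = []"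
| "zsim A T n (Suc k) = (case A T (zsim A T n k) of Ask q \<Rightarrow> zsim A T n k @ [zans n q] | Output f vs \<Rightarrow> zsim A T n k)"

lemma run_prefix:
  assumes "valid_run A w T h" "valid_run A w T h'"
  shows "i \<le> length h \<Longrightarrow> i \<le> length h' \<Longrightarrow> take i h = take i h'"
proof (induction i)
  case 0 then show ?case by simp
next
  case (Suc i)
  then have il: "i < length h" "i < length h'" by auto
  obtain q where q: "A T (take i h) = Ask q" "h ! i = answer_of w q" using assms(1) il(1) unfolding valid_run_def by blast
  obtain q' where q': "A T (take i h') = Ask q'" "h' ! i = answer_of w q'" using assms(2) il(2) unfolding valid_run_def by blast
  have t: "take i h = take i h'" using Suc by simp
  then have "q = q'" using q q' by simp
  then have "h ! i = h' ! i" using q q' by simp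
  then show ?case using t il by (simp add: take_Suc_conv_app_nth)
qed

lemma run_unique:
  assumes "run_outputs A w T h f vs" "run_outputs A w T h' f' vs'"
  shows "h = h'"
proof -
  have v: "valid_run A w T h" "valid_run A w T h'" "A T h = Output f vs" "A T h' = Output f' vs'"
    using assms unfolding run_outputs_def by auto
  have "\<not> length h < length h'"
  proof
    assume l: "length h < length h'"
    have "take (length h) h' = h" using run_prefix[OF v(1,2), of "length h"] l by simp
    moreover obtain q where "A T (take (length h) h') = Ask q" using v(2) l unfolding valid_run_def by blast
    ultimately show False using v(3) by simp
  qed
  moreover have "\<not> length h' < length h"
  proof
    assume l: "length h' < length h"
    have "take (length h') h = h'" using run_prefix[OF v(1,2), of "length h'"] l by simp
    moreover obtain q where "A T (take (length h') h) = Ask q" using v(1) l unfolding valid_run_def by blast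
    ultimately show False using v(4) by simp
  qed
  ultimately have "length h = length h'" by simp
  then show ?thesis using run_prefix[OF v(1,2), of "length h"] by simp
qed

lemma held_univ:
  assumes "training_set w T" "valid_run A w T h"
  shows "i \<le> length h \<Longrightarrow> held T (take i h) \<subseteq> univ w"
proof (induction i)
  case 0
  have "held T [] \<subseteq> univ w" using assms(1) unfolding held_def training_set_def by auto
  then show ?case by simp
next
  case (Suc i)
  then have il: "i < length h" by simp
  obtain q where q: "A T (take i h) = Ask q" "qpos q \<in> held T (take i h)" "h ! i = answer_of w q"
    using assms(2) il unfolding valid_run_def by blast
  have IH: "held T (take i h) \<subseteq> univ w" using Suc by simp
  then have qu: "qpos q \<in> univ w" using q(2) by blast
  have new: "p \<in> univ w" if "answer_of w q = APos (Some p)" for p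
    using that qu by (cases q) (auto simp: univ_def split: if_splits)
  have "held T (take (Suc i) h) = held T (take i h) \<union> {p. h ! i = APos (Some p)}"
    using il unfolding held_def by (auto simp: take_Suc_conv_app_nth)
  then show ?case using IH new q(3) by auto
qed

lemma run_zsim:
  assumes "valid_run A w T h" "training_set w T" "length w = n"
    "\<And>i p. i < length h \<Longrightarrow> A T (zsim A T n i) = Ask (QLabel p) \<Longrightarrow> p \<in> univ w \<Longrightarrow> w ! (p - 1) = 0"
  shows "i \<le> length h \<Longrightarrow> take i h = zsim A T n i"
proof (induction i)
  case 0 then show ?case by simp
next
  case (Suc i)
  then have il: "i < length h" by simp
  obtain q where q: "A T (take i h) = Ask q" "qpos q \<in> held T (take i h)" "h ! i = answer_of w q"
    using assms(1) il unfolding valid_run_def by blast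
  have t: "take i h = zsim A T n i" using Suc by simp
  have qu: "qpos q \<in> univ w" using held_univ[OF assms(2,1), of i] il q(2) by auto
  have "answer_of w q = zans n q"
  proof (cases q)
    case (QLabel p)
    then have "w ! (p - 1) = 0" using assms(4)[OF il] q(1) t qu by simp
    then show ?thesis using QLabel by simp
  qed (use assms(3) in auto)
  then show ?case using t q il by (simp add: take_Suc_conv_app_nth)
qed

lemma zsim_stat:
  assumes "A T (zsim A T n k) = Output f vs"
  shows "k \<le> k' \<Longrightarrow> zsim A T n k' = zsim A T n k"
proof (induction k')
  case 0 then show ?case by simp
next
  case (Suc k')
  show ?case
  proof (cases "k = Suc k'")
    case True then show ?thesis by simp
  next
    case False
    then have "zsim A T n k' = zsim A T n k" using Suc by simp
    then show ?thesis using assms by simp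
  qed
qed


declare upt_Suc[simp del]

definition cellf :: "(nat \<Rightarrow> nat) \<Rightarrow> nat \<Rightarrow> nat \<Rightarrow> nat list \<Rightarrow> nat \<Rightarrow> cell" where
  "cellf L u1 u2 vs p = (L p, {i. i < length vs + 2 \<and> assign u1 u2 vs i = p}, {})"

lemma cells_hyp:
  assumes w: "w = map L [1..<n+1]"
    and e: "eqv K1 K2 Q {..<length vs + 2} {} (map (cellf L u1 u2 vs) [1..<n+1]) (map (cellf L u1' u2' vs) [1..<n+1])"
    and q: "qrank f \<le> Q" and hv: "has_vars f (length vs)" and K: "length vs + 2 + Q \<le> K1" "Q \<le> K2"
    and u: "u1 \<in> univ w" "u2 \<in> univ w" "u1' \<in> univ w" "u2' \<in> univ w" "set vs \<subseteq> univ w"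
  shows "hyp w f vs u1 u2 = hyp w f vs u1' u2'"
proof -
  define m where "m = map (cellf L u1 u2 vs) [1..<n+1]"
  define m' where "m' = map (cellf L u1' u2' vs) [1..<n+1]"
  have lw: "length w = n" using w by simp
  have wf: "wfm (map (cellf L a b vs) [1..<n+1])" for a b
    unfolding wfm_def by (auto simp: cellf_def)
  have fo: "foidx (map (cellf L a b vs) [1..<n+1]) \<subseteq> {..<length vs + 2}" for a b
    unfolding foidx_def by (auto simp: cellf_def)
  have so: "soidx (map (cellf L a b vs) [1..<n+1]) \<subseteq> {}" for a b
    unfolding soidx_def by (auto simp: cellf_def)
  have fst: "map fst (map (cellf L a b vs) [1..<n+1]) = w" for a b
    using w by (simp add: cellf_def)
  have assign_univ: "assign a b vs i \<in> univ w" if "a \<in> univ w" "b \<in> univ w" "i < length vs + 2" for a b i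
    using that u(5) by (auto simp: assign_def)
  have rep: "rep (map (cellf L a b vs) [1..<n+1]) w (assign a b vs) (\<lambda>_. {}) id id (fv1 f) (fv2 f)"
    if ab: "a \<in> univ w" "b \<in> univ w" for a b
  proof -
    have "\<forall>x\<in>fv1 f. assign a b vs x \<in> univ w \<and> id x \<in> fst (snd (map (cellf L a b vs) [1..<n+1] ! (assign a b vs x - 1)))"
    proof
      fix x assume x: "x \<in> fv1 f"
      then have xl: "x < length vs + 2" using hv unfolding has_vars_def by auto
      then have au: "assign a b vs x \<in> univ w" using assign_univ ab by blast
      then have "assign a b vs x - 1 < n" using lw by (auto simp: univ_def)
      then have "map (cellf L a b vs) [1..<n+1] ! (assign a b vs x - 1) = cellf L a b vs (assign a b vs x)"
        using au by (simp add: univ_def)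
      then show "assign a b vs x \<in> univ w \<and> id x \<in> fst (snd (map (cellf L a b vs) [1..<n+1] ! (assign a b vs x - 1)))"
        using au xl by (simp add: cellf_def)
    qed
    moreover have "fv2 f = {}" using hv unfolding has_vars_def by auto
    ultimately show ?thesis unfolding rep_def using fst by simp
  qed
  have c1: "Q \<le> card ({..<K1} - {..<length vs + 2})" using K by simp
  have c2: "Q \<le> card ({..<K2} - {})" using K by simp
  have "sat w (assign u1 u2 vs) (\<lambda>_. {}) f = sat w (assign u1' u2' vs) (\<lambda>_. {}) f"
    apply (rule sound[OF e q wf wf fo fo so so c1 c2])
    using hv apply (simp add: has_vars_def)
    apply (rule rep[OF u(1,2)])
    apply (rule rep[OF u(3,4)])
    done
  then show ?thesis by (simp add: hyp_def)
qed


definition phi :: mso where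
  "phi = Ex1 3 (Conj (Less 0 3) (Conj (Less 3 1) (Conj (Lab 1 3) (Neg (Eq 3 2)))))"

lemma phi_efo: "existential_fo_1param phi"
  unfolding existential_fo_1param_def has_vars_def phi_def
  by (auto intro!: exI[of _ "[3]"])

lemma hyp_phi: "hyp w phi [v] u1 u2 \<longleftrightarrow> (\<exists>z. 1 \<le> z \<and> z \<le> length w \<and> u1 < z \<and> z < u2 \<and> w ! (z - 1) = 1 \<and> z \<noteq> v)"
  unfolding hyp_def phi_def
  apply (auto simp: assign_def univ_def)
  subgoal for u by (intro exI[of _ u]) auto
  done

lemma md: "y < (D::nat) \<Longrightarrow> (X * D + y) mod D = y"
  by simp

locale lay =
  fixes K Wd NB :: nat
  assumes K: "1 \<le> K" and Wb: "4 * NB + 8 \<le> Wd" and Wdvd: "(fact NB :: nat) dvd Wd"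
begin

abbreviation M0 :: nat where "M0 \<equiv> fact NB"
definition D where "D = (K + 2) * Wd"
definition S where "S = 2 * NB + M0 + 4"
definition aP where "aP j = j * S * D + Wd - 1"
definition bP where "bP j = j * S * D + (K + 1) * Wd"
definition cN where "cN j = (j * S + M0) * D + j * Wd - 1"
definition dN where "dN j = (j * S + M0) * D + (j + 1) * Wd"
definition n where "n = (K + 1) * S * D"
definition TT where "TT = (\<lambda>j. (aP j, bP j, True)) ` {1..K} \<union> (\<lambda>j. (cN j, dN j, False)) ` {1..K}"
definition L :: "nat \<Rightarrow> nat \<Rightarrow> nat" where "L r p = (if p mod D = r then 1 else 0)"
definition ww where "ww r = map (L r) [1..<n+1]"
definition cand where "cand j = {j * Wd + NB + 1 .. (j + 1) * Wd - NB - 2}"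
definition Rg where "Rg j = {(j * S - NB - 1) * D ..< (j * S + NB + M0 + 2) * D}"
definition vv where "vv j r = (j * S + M0) * D + r"

lemma M0pos: "1 \<le> M0" by simp

lemma Dge: "3 * Wd \<le> D" using K by (simp add: D_def)

lemma len_ww[simp]: "length (ww r) = n" by (simp add: ww_def)

lemma ww_nth: "1 \<le> p \<Longrightarrow> p \<le> n \<Longrightarrow> ww r ! (p - 1) = L r p"
  unfolding ww_def by (simp del: upt_Suc)

lemma cand_bounds: "j \<in> {1..K} \<Longrightarrow> r \<in> cand j \<Longrightarrow> Wd + NB + 1 \<le> r \<and> r + NB + 2 \<le> (j + 1) * Wd \<and> j * Wd + NB + 1 \<le> r \<and> r < D \<and> r < (K + 1) * Wd"
proof -
  assume j: "j \<in> {1..K}" and r: "r \<in> cand j"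
  have a: "j * Wd + NB + 1 \<le> r" "r \<le> (j + 1) * Wd - NB - 2" using r by (auto simp: cand_def)
  have "Wd \<le> j * Wd" using j by simp
  moreover have "(j + 1) * Wd \<le> (K + 1) * Wd" using j by simp
  moreover have "NB + 2 \<le> (j + 1) * Wd" using j Wb by (simp add: algebra_simps)
  moreover have "(K + 1) * Wd < D" using Wb by (simp add: D_def algebra_simps)
  moreover have "(j + 1) * Wd = j * Wd + Wd" by simp
  ultimately show ?thesis using a by linarith
qed

lemma blk: "y < D \<Longrightarrow> X < Y \<Longrightarrow> X * D + y < Y * (D::nat)"
proof -
  assume a: "y < D" "X < Y"
  have "X * D + y < X * D + D" using a by simp
  also have "\<dots> = (X + 1) * D" by simp
  also have "\<dots> \<le> Y * D" using a by (intro mult_le_mono1) simp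
  finally show ?thesis .
qed

lemma Sge: "M0 + 1 \<le> S" "NB + 1 \<le> S" "1 \<le> S" by (auto simp: S_def)

lemma Dpos: "Wd < D" "1 \<le> D" using Dge Wb by auto

lemma pos_le_n: "j \<le> K \<Longrightarrow> y < D \<Longrightarrow> (j * S + M0) * D + y < n"
proof -
  assume "j \<le> K" "y < D"
  moreover have "j * S + M0 < (K + 1) * S"
  proof -
    have "j * S \<le> K * S" using \<open>j \<le> K\<close> by simp
    moreover have "(K + 1) * S = K * S + S" by simp
    ultimately show ?thesis using Sge(1) by linarith
  qed
  ultimately show ?thesis unfolding n_def using blk by (metis mult.assoc)
qed

lemma pos_le_n': "j \<le> K \<Longrightarrow> y < D \<Longrightarrow> j * S * D + y < n"
  using pos_le_n[of j y] by (simp add: algebra_simps)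

lemma T_univ: "j \<in> {1..K} \<Longrightarrow> aP j \<in> univ (ww r) \<and> bP j \<in> univ (ww r) \<and> cN j \<in> univ (ww r) \<and> dN j \<in> univ (ww r)"
proof -
  assume j: "j \<in> {1..K}"
  have w: "(K + 1) * Wd < D" using Wb by (simp add: D_def algebra_simps)
  have jW: "(j + 1) * Wd \<le> (K + 1) * Wd" using j by simp
  have "aP j = j * S * D + (Wd - 1)" using Wb by (simp add: aP_def)
  then have "aP j < n" using pos_le_n'[of j "Wd - 1"] j Dpos by simp
  moreover have "bP j < n" unfolding bP_def using pos_le_n'[of j "(K + 1) * Wd"] j w by simp
  moreover have "(j + 1) * Wd = j * Wd + Wd" by simp
  then have "j * Wd - 1 < D" using jW w by linarith
  then have "cN j < n" unfolding cN_def using pos_le_n[of j "j * Wd - 1"] j by (simp add: algebra_simps)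
  moreover have "(j + 1) * Wd < D" using jW w by linarith
  then have "dN j < n" unfolding dN_def using pos_le_n[of j "(j + 1) * Wd"] j by simp
  moreover have "1 \<le> aP j" "1 \<le> bP j" "1 \<le> cN j" "1 \<le> dN j"
  proof -
    have "Wd \<le> j * Wd" using j by simp
    then have j8: "8 \<le> j * Wd" using Wb by linarith
    show "1 \<le> cN j" unfolding cN_def using j8 by linarith
    show "1 \<le> aP j" "1 \<le> bP j" "1 \<le> dN j" using Wb j8 by (auto simp: aP_def bP_def dN_def)
  qed
  ultimately show ?thesis by (simp add: univ_def)
qed

lemma TT_train: "training_set (ww r) TT"
  unfolding training_set_def TT_def using T_univ by auto

lemma TT_card: "card TT \<le> 2 * K"
proof -
  have "card TT \<le> card ((\<lambda>j. (aP j, bP j, True)) ` {1..K}) + card ((\<lambda>j. (cN j, dN j, False)) ` {1..K})"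
    unfolding TT_def by (rule card_Un_le)
  also have "\<dots> \<le> K + K" by (intro add_mono) (metis card_atLeastAtMost card_image_le diff_Suc_1 finite_atLeastAtMost)+
  finally show ?thesis by simp
qed

lemma phi_cons:
  assumes j0: "j0 \<in> {1..K}" and r: "r \<in> cand j0"
  shows "consistent (ww r) phi [vv j0 r] TT"
proof -
  note cb = cand_bounds[OF j0 r]
  have w: "(K + 1) * Wd < D" using Wb by (simp add: D_def algebra_simps)
  have vu: "vv j0 r \<in> univ (ww r)" unfolding vv_def univ_def using pos_le_n[of j0 r] j0 cb Dpos by auto
  have pos: "hyp (ww r) phi [vv j0 r] (aP j) (bP j)" if j: "j \<in> {1..K}" for j
  proof -
    define z where "z = j * S * D + r"
    have z1: "1 \<le> z" "z \<le> n" using cb j pos_le_n'[of j r] by (auto simp: z_def)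
    have z2: "aP j < z" "z < bP j" using cb Wb by (auto simp: z_def aP_def bP_def)
    have "z mod D = r" using md[of r D "j * S"] cb by (simp add: z_def)
    then have z3: "ww r ! (z - 1) = 1" using ww_nth[OF z1, of r] by (simp add: L_def)
    have "j * S \<noteq> j0 * S + M0"
    proof (cases "j \<le> j0")
      case True
      then have "j * S \<le> j0 * S" by simp
      then show ?thesis using M0pos by linarith
    next
      case False
      then have "(j0 + 1) * S \<le> j * S" by (intro mult_le_mono1) simp
      then show ?thesis using Sge by (simp add: algebra_simps)
    qed
    then have "z \<noteq> vv j0 r" unfolding z_def vv_def using Dpos by simp
    then have "1 \<le> z \<and> z \<le> length (ww r) \<and> aP j < z \<and> z < bP j \<and> ww r ! (z - 1) = 1 \<and> z \<noteq> vv j0 r"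
      using z1 z2 z3 by simp
    then show ?thesis unfolding hyp_phi by (rule exI)
  qed
  have neg: "\<not> hyp (ww r) phi [vv j0 r] (cN j) (dN j)" if j: "j \<in> {1..K}" for j
  proof
    assume "hyp (ww r) phi [vv j0 r] (cN j) (dN j)"
    then obtain z where z: "1 \<le> z" "z \<le> n" "cN j < z" "z < dN j" "ww r ! (z - 1) = 1" "z \<noteq> vv j0 r"
      unfolding hyp_phi by auto
    define X where "X = j * S + M0"
    have jW: "1 \<le> j * Wd" using j Wb by simp
    have jW2: "(j + 1) * Wd \<le> (K + 1) * Wd" using j by simp
    have zl: "X * D + j * Wd \<le> z" "z < X * D + (j + 1) * Wd" using z(3,4) jW by (auto simp: cN_def dN_def X_def)
    define y where "y = z - X * D"
    have zy: "z = X * D + y" "j * Wd \<le> y" "y < (j + 1) * Wd" using zl by (auto simp: y_def)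
    have "y < D" using zy jW2 w by linarith
    then have "z mod D = y" using zy md by simp
    moreover have "L r z = 1" using z(5) ww_nth[OF z(1,2)] by simp
    ultimately have yr: "y = r" by (simp add: L_def split: if_splits)
    have "j = j0"
    proof (rule ccontr)
      assume "j \<noteq> j0"
      then consider "j + 1 \<le> j0" | "j0 + 1 \<le> j" by linarith
      then show False
      proof cases
        case 1
        then have "(j + 1) * Wd \<le> j0 * Wd" by (intro mult_le_mono1)
        then show False using zy yr cb by linarith
      next
        case 2
        then have "(j0 + 1) * Wd \<le> j * Wd" by (intro mult_le_mono1)
        then show False using zy yr cb by linarith
      qed
    qed
    then have "z = vv j0 r" using zy yr by (simp add: vv_def X_def)
    then show False using z(6) by simp
  qed
  show ?thesis unfolding consistent_def TT_def using vu pos neg by auto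
qed

lemma phi_consistent_TT: "j0 \<in> {1..K} \<Longrightarrow> r \<in> cand j0 \<Longrightarrow> phi_consistent (ww r) phi 1 TT"
  unfolding phi_consistent_def using phi_cons by (intro exI[of _ "[vv j0 r]"]) auto

end


lemma upt_split3: "a \<le> b \<Longrightarrow> b \<le> c \<Longrightarrow> [a..<c] = [a..<b] @ [b..<c]"
  using upt_add_eq_append[of a b "c - b"] by simp

context lay begin

lemma cell_plain: "p \<noteq> u1 \<Longrightarrow> p \<noteq> u2 \<Longrightarrow> p \<notin> set vs \<Longrightarrow> cellf (L r) u1 u2 vs p = (if p mod D = r then Oc else Zc)"
  unfolding cellf_def L_def assign_def by (auto simp: in_set_conv_nth) 

lemma cell_m1: "u1 \<noteq> u2 \<Longrightarrow> u1 \<notin> set vs \<Longrightarrow> u1 mod D \<noteq> r \<Longrightarrow> cellf (L r) u1 u2 vs u1 = (0, {0}, {})"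
  unfolding cellf_def L_def assign_def by (auto simp: in_set_conv_nth) 

lemma cell_m2: "u1 \<noteq> u2 \<Longrightarrow> u2 \<notin> set vs \<Longrightarrow> u2 mod D \<noteq> r \<Longrightarrow> cellf (L r) u1 u2 vs u2 = (0, {1}, {})"
  unfolding cellf_def L_def assign_def by (auto simp: in_set_conv_nth) 

lemma cell_same: "p \<noteq> u1 \<Longrightarrow> p \<noteq> u2 \<Longrightarrow> p \<noteq> u1' \<Longrightarrow> p \<noteq> u2' \<Longrightarrow> cellf L0 u1 u2 vs p = cellf L0 u1' u2' vs p"
  unfolding cellf_def assign_def by auto

lemma mid_equiv:
  assumes j: "j \<in> {1..K}" and r: "r \<in> cand j" and vsR: "set vs \<inter> Rg j = {}"
    and card: "card (cls K1 K2 {0,1} Q {..<length vs + 2} {} ` {m. Good {0,1} {..<length vs + 2} {} m}) \<le> NB"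
  shows "eqv K1 K2 Q {..<length vs + 2} {} (map (cellf (L r) (aP j) (bP j) vs) [1..<n+1]) (map (cellf (L r) (cN j) (dN j) vs) [1..<n+1])"
proof -
  note cb = cand_bounds[OF j r]
  define X where "X = j * S"
  define P0 where "P0 = X * D"
  define BD where "BD = NB * D"
  define MD where "MD = M0 * D"
  define jW where "jW = j * Wd"
  define KW where "KW = (K + 1) * Wd"
  have KWD: "KW + Wd = D" by (simp add: KW_def D_def algebra_simps)
  have jWb: "Wd \<le> jW" "jW + Wd \<le> KW" using j by (auto simp: jW_def KW_def)
  have rb: "jW + NB + 1 \<le> r" "r + NB + 2 \<le> jW + Wd" using cb by (auto simp: jW_def algebra_simps)
  have Xb: "NB + 1 \<le> X" "X + NB + M0 + 2 \<le> (K + 1) * S"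
  proof -
    have "S \<le> X" using j by (simp add: X_def)
    then show "NB + 1 \<le> X" using Sge by linarith
    have "X \<le> K * S" using j by (simp add: X_def)
    moreover have "NB + M0 + 2 \<le> S" by (simp add: S_def)
    ultimately show "X + NB + M0 + 2 \<le> (K + 1) * S" by (simp add: algebra_simps)
  qed
  have P0b: "BD + D \<le> P0" using Xb(1) mult_le_mono1[OF Xb(1), of D] by (simp add: P0_def BD_def algebra_simps)
  have nb: "P0 + BD + MD + 2 * D \<le> n"
  proof -
    have "(X + NB + M0 + 2) * D \<le> (K + 1) * S * D" using Xb(2) by (rule mult_le_mono1)
    then show ?thesis by (simp add: n_def P0_def BD_def MD_def algebra_simps)
  qed
  have Rgj: "Rg j = {P0 - BD - D ..< P0 + BD + MD + 2 * D}"
  proof -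
    have a: "(j * S - NB - 1) * D = P0 - BD - D" by (simp add: P0_def BD_def X_def diff_mult_distrib)
    have b: "(j * S + NB + M0 + 2) * D = P0 + BD + MD + 2 * D" by (simp add: P0_def BD_def MD_def X_def algebra_simps)
    show ?thesis unfolding Rg_def by (subst a, subst b, rule refl)
  qed
  have pos: "aP j = P0 + Wd - 1" "bP j = P0 + KW" "cN j = P0 + MD + jW - 1" "dN j = P0 + MD + jW + Wd"
    by (simp_all add: aP_def bP_def cN_def dN_def P0_def X_def MD_def jW_def KW_def algebra_simps)
  define e where "e = P0 - BD - D + r"
  define tot where "tot = (NB + 2 + (NB + M0)) * D"
  have tot': "tot = 2 * BD + MD + 2 * D" by (simp add: tot_def BD_def MD_def algebra_simps)
  have e1: "1 \<le> e" using rb P0b by (simp add: e_def)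
  have e2: "e + tot \<le> n + 1" using nb cb P0b by (simp add: e_def tot')
  have emod: "e mod D = r"
  proof -
    have "e = (X - NB - 1) * D + r" by (simp add: e_def P0_def BD_def diff_mult_distrib)
    then show ?thesis using md[of r D] cb by simp
  qed
  have inR: "p \<in> Rg j" if "e \<le> p" "p < e + tot" for p
    using that Rgj cb P0b by (auto simp: e_def tot')
  have notvs: "p \<notin> set vs" if "e \<le> p" "p < e + tot" for p
    using inR[OF that] vsR by blast
  have D2: "2 \<le> D" using Dge Wb by linarith
  have NBD: "NB * D = BD" by (simp add: BD_def)
  have NMD: "(NB + M0) * D = BD + MD" by (simp add: BD_def MD_def algebra_simps)
  have neq: "aP j \<noteq> bP j" "cN j \<noteq> dN j" using pos jWb Wb by auto
  have mods: "aP j mod D \<noteq> r" "bP j mod D \<noteq> r" "cN j mod D \<noteq> r" "dN j mod D \<noteq> r"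
  proof -
    have "aP j = X * D + (Wd - 1)" using pos Wb by (simp add: P0_def)
    moreover have "Wd - 1 < D" using Dpos by simp
    ultimately have "aP j mod D = Wd - 1" using md by presburger
    then show "aP j mod D \<noteq> r" using rb jWb by linarith
    have "bP j = X * D + KW" using pos by (simp add: P0_def)
    moreover have "KW < D" using KWD Wb by linarith
    ultimately show "bP j mod D \<noteq> r" using md cb by (simp add: KW_def)
    have "cN j = (X + M0) * D + (jW - 1)" using pos jWb Wb by (simp add: P0_def MD_def algebra_simps)
    moreover have "jW - 1 < D" using jWb KWD Wb by linarith
    ultimately show "cN j mod D \<noteq> r" using md rb by auto
    have "dN j = (X + M0) * D + (jW + Wd)" using pos by (simp add: P0_def MD_def algebra_simps)
    moreover have "jW + Wd < D" using jWb KWD Wb by linarith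
    ultimately show "dN j mod D \<noteq> r" using md rb by auto
  qed
  have inreg: "e \<le> aP j" "aP j < e + tot" "e \<le> bP j" "bP j < e + tot" "e \<le> cN j" "cN j < e + tot" "e \<le> dN j" "dN j < e + tot"
    using pos P0b rb jWb KWD Wb by (auto simp: e_def tot')
  define F1 where "F1 = cellf (L r) (aP j) (bP j) vs"
  define F2 where "F2 = cellf (L r) (cN j) (dN j) vs"
  have F1v: "F1 (aP j) = (0, {0}, {})" "F1 (bP j) = (0, {1}, {})"
    unfolding F1_def using cell_m1 cell_m2 neq mods notvs inreg by auto
  have F2v: "F2 (cN j) = (0, {0}, {})" "F2 (dN j) = (0, {1}, {})"
    unfolding F2_def using cell_m1 cell_m2 neq mods notvs inreg by auto
  have M1: "map F1 [e..<e + tot] = pw (Bc D) NB @ (Oc # replicate (D + Wd - r - 2) Zc @ [(0, {0}, {})] @ replicate (r - Wd) Zc)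
      @ (Oc # replicate (KW - r - 1) Zc @ [(0, {1}, {})] @ replicate (Wd + r - 1) Zc) @ pw (Bc D) (NB + M0)"
  proof -
    have h: "map F1 [e..<e + (NB + 2 + (NB + M0)) * D] = pw (Bc D) NB
     @ (Oc # replicate (aP j - (e + NB*D) - 1) Zc @ [F1 (aP j)] @ replicate (D - 2 - (aP j - (e + NB*D) - 1)) Zc)
     @ (Oc # replicate (bP j - (e + NB*D + D) - 1) Zc @ [F1 (bP j)] @ replicate (D - 2 - (bP j - (e + NB*D + D) - 1)) Zc)
     @ pw (Bc D) (NB + M0)"
    proof (rule mid_shape[OF D2 emod])
      show "e + NB * D < aP j" "aP j < e + NB * D + D" "e + NB * D + D < bP j" "bP j < e + NB * D + D + D"
        using pos P0b rb jWb KWD Wb cb by (auto simp: e_def NBD)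
    next
      fix p assume p: "e \<le> p" "p < e + (NB + 2 + (NB + M0)) * D" "p \<noteq> aP j" "p \<noteq> bP j"
      then have "p \<notin> set vs" using notvs by (simp add: tot_def)
      then show "F1 p = (if p mod D = r then Oc else Zc)" unfolding F1_def using cell_plain p by blast
    qed
    have z: "aP j - (e + NB*D) - 1 = D + Wd - r - 2" "D - 2 - (D + Wd - r - 2) = r - Wd"
      "bP j - (e + NB*D + D) - 1 = KW - r - 1" "D - 2 - (KW - r - 1) = Wd + r - 1"
      using pos P0b rb jWb KWD Wb cb by (auto simp: e_def NBD)
    show ?thesis using h unfolding z F1v tot_def .
  qed
  have M2: "map F2 [e..<e + tot] = pw (Bc D) (NB + M0) @ (Oc # replicate (D + jW - r - 2) Zc @ [(0, {0}, {})] @ replicate (r - jW) Zc)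
      @ (Oc # replicate (jW + Wd - r - 1) Zc @ [(0, {1}, {})] @ replicate (D - jW - Wd + r - 1) Zc) @ pw (Bc D) NB"
  proof -
    have tt: "e + tot = e + (NB + M0 + 2 + NB) * D" by (simp add: tot_def algebra_simps)
    have h: "map F2 [e..<e + (NB + M0 + 2 + NB) * D] = pw (Bc D) (NB + M0)
     @ (Oc # replicate (cN j - (e + (NB + M0)*D) - 1) Zc @ [F2 (cN j)] @ replicate (D - 2 - (cN j - (e + (NB + M0)*D) - 1)) Zc)
     @ (Oc # replicate (dN j - (e + (NB + M0)*D + D) - 1) Zc @ [F2 (dN j)] @ replicate (D - 2 - (dN j - (e + (NB + M0)*D + D) - 1)) Zc)
     @ pw (Bc D) NB"
    proof (rule mid_shape[OF D2 emod])
      show "e + (NB + M0) * D < cN j" "cN j < e + (NB + M0) * D + D" "e + (NB + M0) * D + D < dN j" "dN j < e + (NB + M0) * D + D + D"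
        using pos P0b rb jWb KWD Wb cb by (auto simp: e_def NMD)
    next
      fix p assume p: "e \<le> p" "p < e + (NB + M0 + 2 + NB) * D" "p \<noteq> cN j" "p \<noteq> dN j"
      then have "p \<notin> set vs" using notvs tt by simp
      then show "F2 p = (if p mod D = r then Oc else Zc)" unfolding F2_def using cell_plain p by blast
    qed
    have z: "cN j - (e + (NB + M0)*D) - 1 = D + jW - r - 2" "D - 2 - (D + jW - r - 2) = r - jW"
      "dN j - (e + (NB + M0)*D + D) - 1 = jW + Wd - r - 1" "D - 2 - (jW + Wd - r - 1) = D - jW - Wd + r - 1"
      using pos P0b rb jWb KWD Wb cb by (auto simp: e_def NMD)
    show ?thesis using h unfolding z F2v tt[symmetric] .
  qed
  define U where "U = {..<length vs + 2}"
  have fin: "finite {0::nat, 1}" "finite U" "finite ({}::nat set)" "(0::nat) \<in> {0, 1}" "(1::nat) \<in> {0, 1}"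
    by (auto simp: U_def)
  have cardU: "card (cls K1 K2 {0,1} Q U {} ` {m. Good {0,1} U {} m}) \<le> NB" using card by (simp add: U_def)
  have dvW: "fact NB dvd (jW - Wd)"
  proof -
    have "jW - Wd = (j - 1) * Wd" by (simp add: jW_def diff_mult_distrib)
    then show ?thesis using Wdvd by simp
  qed
  have dvK: "fact NB dvd (KW - jW - Wd)"
  proof -
    have "KW - jW - Wd = (K - j) * Wd" by (simp add: KW_def jW_def diff_mult_distrib algebra_simps)
    then show ?thesis using Wdvd by simp
  qed
  have q1: "eqv K1 K2 Q U {} (pw (Bc D) NB) (pw (Bc D) (NB + M0))"
    by (rule pumpB[OF fin cardU]) simp_all
  have q2: "eqv K1 K2 Q U {} (replicate (D + Wd - r - 2) Zc) (replicate (D + jW - r - 2) Zc)"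
  proof -
    have a: "D + jW - r - 2 = (D + Wd - r - 2) + (jW - Wd)" using jWb cb Wb by linarith
    show ?thesis unfolding a by (rule pumpZ[OF fin(1-4) cardU _ dvW]) (use cb Wb in linarith)
  qed
  have q3: "eqv K1 K2 Q U {} (replicate (r - Wd) Zc) (replicate (r - jW) Zc)"
  proof -
    have a: "r - Wd = (r - jW) + (jW - Wd)" using jWb rb by linarith
    show ?thesis unfolding a by (rule eqv_sym, rule pumpZ[OF fin(1-4) cardU _ dvW]) (use rb in linarith)
  qed
  have q4: "eqv K1 K2 Q U {} (replicate (KW - r - 1) Zc) (replicate (jW + Wd - r - 1) Zc)"
  proof -
    have a: "KW - r - 1 = (jW + Wd - r - 1) + (KW - jW - Wd)" using jWb rb by linarith
    show ?thesis unfolding a by (rule eqv_sym, rule pumpZ[OF fin(1-4) cardU _ dvK]) (use rb in linarith)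
  qed
  have q5: "eqv K1 K2 Q U {} (replicate (Wd + r - 1) Zc) (replicate (D - jW - Wd + r - 1) Zc)"
  proof -
    have a: "D - jW - Wd + r - 1 = (Wd + r - 1) + (KW - jW - Wd)" using jWb rb KWD by linarith
    show ?thesis unfolding a by (rule pumpZ[OF fin(1-4) cardU _ dvK]) (use Wb in linarith)
  qed
  have q6: "eqv K1 K2 Q U {} (pw (Bc D) (NB + M0)) (pw (Bc D) NB)" using q1 by (rule eqv_sym)
  have EM: "eqv K1 K2 Q U {} (map F1 [e..<e + tot]) (map F2 [e..<e + tot])"
    unfolding M1 M2 by (rule mids_eqv[OF q1 q2 q3 q4 q5 q6])
  have sp: "[1..<n+1] = [1..<e] @ [e..<e + tot] @ [e + tot..<n+1]"
    using upt_split3[of 1 e "n+1"] upt_split3[of e "e + tot" "n+1"] e1 e2 by (simp del: upt_Suc)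
  have LL: "map F1 [1..<e] = map F2 [1..<e]"
  proof (rule map_cong[OF refl])
    fix p assume "p \<in> set [1..<e]"
    then have "p < e" by (simp del: upt_Suc)
    then show "F1 p = F2 p" unfolding F1_def F2_def using inreg by (intro cell_same) auto
  qed
  have RR: "map F1 [e + tot..<n+1] = map F2 [e + tot..<n+1]"
  proof (rule map_cong[OF refl])
    fix p assume "p \<in> set [e + tot..<n+1]"
    then have "e + tot \<le> p" by (simp del: upt_Suc)
    then show "F1 p = F2 p" unfolding F1_def F2_def using inreg by (intro cell_same) auto
  qed
  have "eqv K1 K2 Q U {} (map F1 [1..<e] @ map F1 [e..<e + tot] @ map F1 [e + tot..<n+1]) (map F2 [1..<e] @ map F2 [e..<e + tot] @ map F2 [e + tot..<n+1])"
    unfolding LL RR by (intro eqv_append eqv_refl EM)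
  then show ?thesis unfolding sp F1_def F2_def U_def by simp
qed

end


context lay begin

lemma set_ww: "set (ww r) \<subseteq> {0, 1}"
  by (auto simp: ww_def L_def)

lemma Rg_disj: "j < j' \<Longrightarrow> Rg j \<inter> Rg j' = {}"
proof -
  assume jj: "j < j'"
  have "(j + 1) * S \<le> j' * S" using jj by (intro mult_le_mono1) simp
  then have a: "j * S + S \<le> j' * S" by simp
  have "S = 2 * NB + M0 + 4" by (rule S_def)
  then have "j * S + NB + M0 + 2 \<le> j' * S - NB - 1" using a by linarith
  then have "(j * S + NB + M0 + 2) * D \<le> (j' * S - NB - 1) * D" by (rule mult_le_mono1)
  then show ?thesis unfolding Rg_def by auto
qed

lemma free_group:
  assumes "length vs < K"
  shows "\<exists>j\<in>{1..K}. set vs \<inter> Rg j = {}"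
proof (rule ccontr)
  assume "\<not> ?thesis"
  then have ne: "\<forall>j\<in>{1..K}. set vs \<inter> Rg j \<noteq> {}" by blast
  define pick where "pick j = (SOME x. x \<in> set vs \<inter> Rg j)" for j
  have pk: "pick j \<in> set vs \<inter> Rg j" if "j \<in> {1..K}" for j
  proof -
    have "\<exists>x. x \<in> set vs \<inter> Rg j" using ne that by blast
    then show ?thesis unfolding pick_def by (rule someI_ex)
  qed
  have "inj_on pick {1..K}"
  proof (rule inj_onI)
    fix j j' assume a: "j \<in> {1..K}" "j' \<in> {1..K}" "pick j = pick j'"
    have x: "pick j \<in> Rg j" "pick j \<in> Rg j'" using pk[OF a(1)] pk[OF a(2)] a(3) by auto
    show "j = j'"
    proof (rule ccontr)
      assume "j \<noteq> j'"
      then have "j < j' \<or> j' < j" by linarith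
      then show False using x Rg_disj by blast
    qed
  qed
  moreover have "pick ` {1..K} \<subseteq> set vs" using pk by blast
  ultimately have "card {1..K} \<le> card (set vs)"
    using card_image card_mono finite_set by metis
  then have "K \<le> length vs" using card_length[of vs] by simp
  then show False using assms by simp
qed

lemma card_cand: "card (cand j) = Wd - 2 * NB - 2"
proof -
  have e: "(j + 1) * Wd = j * Wd + Wd" by simp
  show ?thesis unfolding cand_def card_atLeastAtMost using e Wb by linarith
qed

end

theorem theorem8:
  shows "\<exists>(\<Sigma>::nat set) \<phi>. finite \<Sigma> \<and> existential_fo_1param \<phi> \<and>
           \<not> (\<exists>A. consistent_formula_learner \<Sigma> \<phi> A \<and> sublinear_time \<Sigma> \<phi> A)"
proof (intro exI[of _ "{0, 1}"] exI[of _ phi] conjI notI)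
  show "finite {0::nat, 1}" by simp
  show "existential_fo_1param phi" by (rule phi_efo)
  assume "\<exists>A. consistent_formula_learner {0, 1} phi A \<and> sublinear_time {0, 1} phi A"
  then obtain A where cfl: "consistent_formula_learner {0, 1} phi A" and sl: "sublinear_time {0, 1} phi A" by blast
  from cfl obtain Q Lb where Lrn: "\<And>w T. set w \<subseteq> {0, 1} \<Longrightarrow> training_set w T \<Longrightarrow> phi_consistent w phi 1 T \<Longrightarrow>
     (\<exists>h f vs. run_outputs A w T h f vs \<and> qrank f \<le> Q \<and> length vs \<le> Lb \<and> has_vars f (length vs) \<and> consistent w f vs T)"
    unfolding consistent_formula_learner_def by blast
  define K1 where "K1 = Lb + 2 + Q"
  define K2 where "K2 = Q"
  define cc where "cc l = card (cls K1 K2 {0,1} Q {..<l + 2} {} ` {m. Good {0,1} {..<l + 2} {} m})" for l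
  define NB where "NB = (\<Sum>l\<le>Lb. cc l)"
  have ccNB: "cc l \<le> NB" if "l \<le> Lb" for l
    unfolding NB_def using that by (intro member_le_sum) auto
  define K where "K = Lb + 1"
  have "\<exists>g. (\<lambda>n. g n / real n) \<longlonglongrightarrow> 0 \<and> (\<forall>w T. set w \<subseteq> {0, 1} \<and> training_set w T \<and> phi_consistent w phi 1 T \<and> card T \<le> 2 * K \<longrightarrow>
     (\<exists>h f vs. run_outputs A w T h f vs \<and> real (length h) \<le> g (length w)))"
    using sl unfolding sublinear_time_def by (rule spec)
  then obtain g where glim: "(\<lambda>n. g n / real n) \<longlonglongrightarrow> 0" and SL: "\<forall>w T. set w \<subseteq> {0, 1} \<and> training_set w T \<and> phi_consistent w phi 1 T \<and> card T \<le> 2 * K \<longrightarrow>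
     (\<exists>h f vs. run_outputs A w T h f vs \<and> real (length h) \<le> g (length w))" by blast
  define S0 where "S0 = 2 * NB + fact NB + 4"
  define C where "C = (K + 1) * S0 * (K + 2)"
  have Cpos: "0 < C" by (simp add: C_def S0_def)
  obtain N0 where N0: "\<And>m. N0 \<le> m \<Longrightarrow> norm (g m / real m - 0) < 1 / (2 * real C)"
    using LIMSEQ_D[OF glim, of "1 / (2 * real C)"] Cpos by auto
  define Wd where "Wd = fact NB * (N0 + 4 * NB + 8)"
  have fpos: "(1::nat) \<le> fact NB" by simp
  have WN0: "N0 \<le> Wd"
  proof -
    have "1 * (N0 + 4 * NB + 8) \<le> fact NB * (N0 + 4 * NB + 8)" by (rule mult_le_mono1[OF fpos])
    then have "N0 + 4 * NB + 8 \<le> Wd" unfolding Wd_def by simp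
    then show ?thesis by linarith
  qed
  interpret lay K Wd NB
  proof
    show "1 \<le> K" by (simp add: K_def)
    have "1 * (N0 + 4 * NB + 8) \<le> fact NB * (N0 + 4 * NB + 8)" by (rule mult_le_mono1[OF fpos])
    then have a: "N0 + 4 * NB + 8 \<le> Wd" unfolding Wd_def by simp
    then show "4 * NB + 8 \<le> Wd" by linarith
    show "(fact NB :: nat) dvd Wd" by (simp add: Wd_def)
  qed
  have nC: "n = C * Wd" by (simp add: n_def C_def S_def S0_def D_def algebra_simps)
  have nN0: "N0 \<le> n"
  proof -
    have "1 * Wd \<le> C * Wd" by (rule mult_le_mono1) (use Cpos in simp)
    then have "Wd \<le> C * Wd" by simp
    then show ?thesis using WN0 nC by linarith
  qed
  have Wpos: "8 \<le> Wd" using Wb by simp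
  have gn: "g n < real Wd / 2"
  proof -
    have npos: "0 < real n" using nC Cpos Wpos by simp
    have "\<bar>g n / real n\<bar> < 1 / (2 * real C)" using N0[OF nN0] by simp
    then have "g n / real n < 1 / (2 * real C)" by (meson abs_ge_self le_less_trans)
    then have "g n < 1 / (2 * real C) * real n" using npos by (simp add: pos_divide_less_eq)
    also have "\<dots> = real Wd / 2" using nC Cpos by simp
    finally show ?thesis .
  qed
  define G where "G = nat \<lfloor>g n\<rfloor>"
  have G2: "2 * G < Wd"
  proof (cases "g n \<le> 0")
    case True then show ?thesis using Wpos by (simp add: G_def nat_floor_neg)
  next
    case False
    then have "real G \<le> g n" unfolding G_def by (intro of_nat_floor) simp
    then have "real (2 * G) < real Wd" using gn by simp
    then show ?thesis by linarith
  qed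
  define vs0 where "vs0 = (case A TT (zsim A TT n G) of Output f vs \<Rightarrow> vs | Ask q \<Rightarrow> [])"
  define Q0 where "Q0 = {p. \<exists>i<G. A TT (zsim A TT n i) = Ask (QLabel p)}"
  have cQ0: "card ((\<lambda>p. p mod D) ` Q0) \<le> G"
  proof -
    define qp where "qp i = (case A TT (zsim A TT n i) of Ask (QLabel p) \<Rightarrow> p | _ \<Rightarrow> 0)" for i
    have sub: "Q0 \<subseteq> qp ` {..<G}"
    proof
      fix p assume "p \<in> Q0"
      then obtain i where "i < G" "A TT (zsim A TT n i) = Ask (QLabel p)" unfolding Q0_def by blast
      then show "p \<in> qp ` {..<G}" unfolding qp_def by force
    qed
    have "card Q0 \<le> G" using card_mono[OF _ sub] card_image_le[of "{..<G}" qp] by fastforce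
    moreover have "finite Q0" using sub finite_surj by blast
    ultimately show ?thesis using card_image_le le_trans by blast
  qed
  define j0 where "j0 = (if \<exists>j\<in>{1..K}. set vs0 \<inter> Rg j = {} then (SOME j. j \<in> {1..K} \<and> set vs0 \<inter> Rg j = {}) else 1)"
  have j0K: "j0 \<in> {1..K}"
  proof (cases "\<exists>j\<in>{1..K}. set vs0 \<inter> Rg j = {}")
    case True
    then have "\<exists>j. j \<in> {1..K} \<and> set vs0 \<inter> Rg j = {}" by blast
    then have "(SOME j. j \<in> {1..K} \<and> set vs0 \<inter> Rg j = {}) \<in> {1..K}" by (metis (mono_tags, lifting) someI_ex)
    then show ?thesis using True by (simp add: j0_def)
  next
    case False then show ?thesis using K by (simp add: j0_def)
  qed
  have j0free: "set vs0 \<inter> Rg j0 = {}" if "\<exists>j\<in>{1..K}. set vs0 \<inter> Rg j = {}"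
  proof -
    have "\<exists>j. j \<in> {1..K} \<and> set vs0 \<inter> Rg j = {}" using that by blast
    then have "set vs0 \<inter> Rg (SOME j. j \<in> {1..K} \<and> set vs0 \<inter> Rg j = {}) = {}" by (metis (mono_tags, lifting) someI_ex)
    then show ?thesis using that by (simp add: j0_def)
  qed
  have candex: "\<exists>r. r \<in> cand j0 \<and> r \<notin> (\<lambda>p. p mod D) ` Q0"
  proof (rule ccontr)
    assume "\<not> ?thesis"
    then have "cand j0 \<subseteq> (\<lambda>p. p mod D) ` Q0" by blast
    moreover have "finite ((\<lambda>p. p mod D) ` Q0)"
    proof -
      have "(\<lambda>p. p mod D) ` Q0 \<subseteq> {..<D}" using Dpos by auto
      then show ?thesis by (rule finite_subset) simp
    qed
    ultimately have "card (cand j0) \<le> G" using card_mono cQ0 le_trans by blast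
    then show False using card_cand G2 Wb by simp
  qed
  define r where "r = (SOME r. r \<in> cand j0 \<and> r \<notin> (\<lambda>p. p mod D) ` Q0)"
  have r: "r \<in> cand j0" "r \<notin> (\<lambda>p. p mod D) ` Q0" using someI_ex[OF candex] unfolding r_def by auto
  define w where "w = ww r"
  have wf: "set w \<subseteq> {0, 1}" "training_set w TT" "phi_consistent w phi 1 TT" "card TT \<le> 2 * K" "length w = n"
    using set_ww TT_train phi_consistent_TT[OF j0K r(1)] TT_card by (auto simp: w_def)
  obtain h f vs where run: "run_outputs A w TT h f vs" and fq: "qrank f \<le> Q" "length vs \<le> Lb"
    "has_vars f (length vs)" "consistent w f vs TT"
    using Lrn[OF wf(1-3)] by blast
  obtain h' f' vs' where run': "run_outputs A w TT h' f' vs'" and lh: "real (length h') \<le> g (length w)"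
    using SL wf by blast
  have hh: "h = h'" using run_unique[OF run run'] .
  have lG: "length h \<le> G" unfolding G_def using lh hh wf(5) by (intro le_nat_floor) simp
  have vr: "valid_run A w TT h" and Aout: "A TT h = Output f vs" using run unfolding run_outputs_def by auto
  have zs: "take i h = zsim A TT n i" if "i \<le> length h" for i
  proof (rule run_zsim[OF vr wf(2) wf(5) _ that])
    fix i p assume i: "i < length h" and a: "A TT (zsim A TT n i) = Ask (QLabel p)" and pu: "p \<in> univ w"
    have "i < G" using i lG by linarith
    then have "p \<in> Q0" unfolding Q0_def using a by blast
    then have "p mod D \<noteq> r" using r(2) by auto
    moreover have "1 \<le> p" "p \<le> n" using pu wf(5) by (auto simp: univ_def)
    ultimately show "w ! (p - 1) = 0" using ww_nth[of p r] by (simp add: w_def L_def)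
  qed
  have hz: "zsim A TT n (length h) = h" using zs[of "length h"] by simp
  have "zsim A TT n G = zsim A TT n (length h)" using zsim_stat[of A TT n "length h" f vs G] Aout hz lG by simp
  then have "vs0 = vs" using Aout hz by (simp add: vs0_def)
  moreover have "\<exists>j\<in>{1..K}. set vs \<inter> Rg j = {}" using free_group fq(2) by (simp add: K_def)
  ultimately have free: "set vs \<inter> Rg j0 = {}" using j0free by simp
  have cardv: "card (cls K1 K2 {0,1} Q {..<length vs + 2} {} ` {m. Good {0,1} {..<length vs + 2} {} m}) \<le> NB"
    using ccNB[OF fq(2)] by (simp add: cc_def)
  have EQ: "eqv K1 K2 Q {..<length vs + 2} {} (map (cellf (L r) (aP j0) (bP j0) vs) [1..<n+1]) (map (cellf (L r) (cN j0) (dN j0) vs) [1..<n+1])"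
    by (rule mid_equiv[OF j0K r(1) free cardv])
  have vsu: "set vs \<subseteq> univ w" using fq(4) unfolding consistent_def by blast
  have tu: "aP j0 \<in> univ w" "bP j0 \<in> univ w" "cN j0 \<in> univ w" "dN j0 \<in> univ w" using T_univ[OF j0K] by (auto simp: w_def)
  have "hyp w f vs (aP j0) (bP j0) = hyp w f vs (cN j0) (dN j0)"
    by (rule cells_hyp[OF _ EQ fq(1) fq(3) _ _ tu vsu]) (auto simp: w_def ww_def K1_def K2_def fq(2))
  moreover have "(aP j0, bP j0, True) \<in> TT" "(cN j0, dN j0, False) \<in> TT" using j0K by (auto simp: TT_def)
  ultimately show False using fq(4) unfolding consistent_def by fastforce
qed


end
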